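(* Let $\theta\colon\mathbb F(A)\curvearrowright\Omega$ be a convex subshift over a finite alphabet $A$ and $n\ge1$. Let $\Psi_n\colon\mathbb F^{[n:\Omega]}\to\mathbb F(A)$ be the homomorphism $[B\xleftarrow{a}B']\mapsto a$ and $\psi_n\colon\Omega^{[n]}\to\Omega$, $\psi_n(\eta)=\{\Psi_n(\beta):\beta\in\eta\}$. Then $(\psi_n,\Psi_n)$ is a direct dynamical equivalence $\theta^{[n]}\xrightarrow{\approx}\theta$. In particular, every convex subshift of finite type is directly dynamically equivalent to a $1$-step convex subshift.
   Context: Convex subshifts. Let $A$ be a finite alphabet, $\mathbb F=\mathbb F(A)$. $\mathcal C=\mathcal C(A)$ is the set of subsets $\xi\subseteq\mathbb F$ with $1\in\xi$ that are right-convex: whenever a reduced word $a_m^{\varepsilon_m}\cdots a_1^{\varepsilon_1}$ ($a_i\in A$, $\varepsilon_i=\pm1$) lies in $\xi$, so does $a_k^{\varepsilon_k}\cdots a_1^{\varepsilon_1}$ for all $k<m$; topology from $\{0,1\}^{\mathbb F}$. Full convex shift: partial action of $\mathbb F$ on $\mathcal C$ with domains $\mathcal C_\alpha=\{\xi:\alpha^{-1}\in\xi\}$, $\alpha.\xi=\xi\alpha^{-1}$ for $\alpha\in\xi$. A convex subshift is the restriction to a closed invariant $\Omega\subseteq\mathcal C$. An $n$-ball is $B\in\mathcal C$ with all $|\alpha|\le n$, together with radius $n$; $\xi^n=\{\alpha\in\xi:|\alpha|\le n\}$. For an $n$-ball $B$, $\xi\not\equiv B$ means $(\alpha.\xi)^n\ne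 B$ for all $\alpha\in\xi$; $\Omega^{\mathcal F}=\{\xi\in\mathcal C:\xi\not\equiv B\ \forall B\in\mathcal F\}$. $\Omega$ is of finite type if $\Omega=\Omega^{\mathcal F}$ for a finite set $\mathcal F$ of balls; $R$-step if $\mathcal F$ can be taken to be a finite set of $R$-balls. $n$-ball subshift: $A^{[n:\Omega]}$ is the finite set of formal symbols $[(a.\xi)^n\xleftarrow{a}\xi^n]$ with $\xi\in\Omega$, $a\in A$, $a\in\xi$ (determined by the triple $(B,a,B')$), with $[B'\xleftarrow{a^{-1}}B]:=[B\xleftarrow{a}B']^{-1}$ in $\mathbb F^{[n:\Omega]}=\mathbb F(A^{[n:\Omega]})$. For $\xi\in\Omega$, $\alpha=s_m\cdots s_1\in\xi$ reduced, $B_k=((s_k\cdots s_1).\xi)^n$, $\phi_n(\xi,\alpha)=[B_m\xleftarrow{s_m}B_{m-1}]\cdots[B_1\xleftarrow{s_1}B_0]$, $\phi_n(\xi,1)=1$, $\phi_n(\xi)=\{\phi_n(\xi,\alpha):\alpha\in\xi\}$. $\theta^{[n]}$ is the restriction of the full convex shift on $A^{[n:\Omega]}$ to $\Omega^{[n]}:=\phi_n(\Omega)$. Partial actions: $\Omega_g$ is the domain of $\theta_{g^{-1}}$. Given a homomorphism $\Psi\colon G\to H$ and partial actions on $\Omega,\Omega'$, a continuous $\varphi\colon\Omega\to\Omega'$ is $\Psi$-equivariant if $\varphi(\Omega_g)\subseteq\Omega'_{\Psi(g)}$ and $\varphi(g.x)=\Psi(g).\varphi(x)$ for $x\in\Omega_{g^{-1}}$;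 $(\varphi,\Psi)$ is a direct dynamical equivalence if moreover $\varphi$ is a homeomorphism, $\Omega_g\cap\Omega_{g'}=\emptyset$ whenever $g\ne g'$ and $\Psi(g)=\Psi(g')$, and $\Omega'_h=\bigcup_{\Psi(g)=h}\varphi(\Omega_g)$ for all $h$. *)

theory Defs
  imports "HOL-Analysis.Analysis"
begin

text \<open>A letter is a pair (a, e) standing for a^e, with e = True for exponent +1 and
  e = False for exponent -1.  A word a_m^{e_m} ... a_1^{e_1} is the list
  [(a_m,e_m), ..., (a_1,e_1)] (written order: head = leftmost letter, the last list
  element is the letter a_1^{e_1} which is applied first).\<close>

type_synonym 'a letter = "'a \<times> bool"
type_synonym 'a word = "'a letter list"

definition inv_letter :: "'a letter \<Rightarrow> 'a letter" where
  "inv_letter x = (fst x, \<not> snd x)"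

fun reduced :: "'a word \<Rightarrow> bool" where
  "reduced [] = True"
| "reduced [x] = True"
| "reduced (x # y # ws) = (y \<noteq> inv_letter x \<and> reduced (y # ws))"

definition red_cons :: "'a letter \<Rightarrow> 'a word \<Rightarrow> 'a word" where
  "red_cons x ws = (case ws of [] \<Rightarrow> [x]
      | y # ys \<Rightarrow> (if y = inv_letter x then ys else x # ws))"

definition freduce :: "'a word \<Rightarrow> 'a word" where
  "freduce ws = foldr red_cons ws []"

definition fmult :: "'a word \<Rightarrow> 'a word \<Rightarrow> 'a word" where
  "fmult g h = freduce (g @ h)"

definition finv :: "'a word \<Rightarrow> 'a word" where
  "finv g = rev (map inv_letter g)"

definition fg :: "'a set \<Rightarrow> 'a word set" where
  "fg A = {w. reduced w \<and> fst ` set w \<subseteq> A}"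

definition fg_hom :: "'a set \<Rightarrow> 'b set \<Rightarrow> ('a word \<Rightarrow> 'b word) \<Rightarrow> bool" where
  "fg_hom A B \<Psi> \<longleftrightarrow> (\<forall>g\<in>fg A. \<Psi> g \<in> fg B) \<and>
      (\<forall>g\<in>fg A. \<forall>h\<in>fg A. \<Psi> (fmult g h) = fmult (\<Psi> g) (\<Psi> h))"

text \<open>Right-convex subsets of F(A) containing 1: for a reduced word a_m..a_1 in xi,
  all a_k..a_1 (k < m) are in xi, i.e. xi is closed under dropping leftmost letters.\<close>
definition convex :: "'a set \<Rightarrow> 'a word set \<Rightarrow> bool" where
  "convex A \<xi> \<longleftrightarrow> \<xi> \<subseteq> fg A \<and> [] \<in> \<xi> \<and> (\<forall>w\<in>\<xi>. \<forall>k. drop k w \<in> \<xi>)"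

definition CC :: "'a set \<Rightarrow> 'a word set set" where
  "CC A = {\<xi>. convex A \<xi>}"

text \<open>Topology on sets of words inherited from {0,1}^F: the product topology, generated
  by the cylinder sets {xi. w in xi} and {xi. w notin xi}.\<close>
definition cantor_top :: "'a word set topology" where
  "cantor_top = topology_generated_by
      ((\<lambda>w. {\<xi>. w \<in> \<xi>}) ` UNIV \<union> (\<lambda>w. {\<xi>. w \<notin> \<xi>}) ` UNIV)"

text \<open>The full convex shift: alpha.xi = xi alpha^{-1} (used for alpha in xi).\<close>
definition act :: "'a word \<Rightarrow> 'a word set \<Rightarrow> 'a word set" where
  "act \<alpha> \<xi> = (\<lambda>\<beta>. fmult \<beta> (finv \<alpha>)) ` \<xi>"

text \<open>Domain Omega_g of the restricted partial action (= domain of theta_{g^{-1}}),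
  i.e. Omega_g = Omega \<inter> C_g with C_g = {xi. g^{-1} in xi}.\<close>
definition cdom :: "'a word set set \<Rightarrow> 'a word \<Rightarrow> 'a word set set" where
  "cdom \<Omega> g = {\<xi> \<in> \<Omega>. finv g \<in> \<xi>}"

definition convex_subshift :: "'a set \<Rightarrow> 'a word set set \<Rightarrow> bool" where
  "convex_subshift A \<Omega> \<longleftrightarrow> \<Omega> \<subseteq> CC A \<and> closedin cantor_top \<Omega> \<and>
      (\<forall>\<xi>\<in>\<Omega>. \<forall>\<alpha>\<in>\<xi>. act \<alpha> \<xi> \<in> \<Omega>)"

definition ball_of :: "nat \<Rightarrow> 'a word set \<Rightarrow> 'a word set" where
  "ball_of n \<xi> = {\<alpha> \<in> \<xi>. length \<alpha> \<le> n}"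

definition is_ball :: "'a set \<Rightarrow> 'a word set \<times> nat \<Rightarrow> bool" where
  "is_ball A Bn \<longleftrightarrow> fst Bn \<in> CC A \<and> (\<forall>\<alpha>\<in>fst Bn. length \<alpha> \<le> snd Bn)"

definition avoids :: "'a word set \<Rightarrow> 'a word set \<times> nat \<Rightarrow> bool" where
  "avoids \<xi> Bn \<longleftrightarrow> (\<forall>\<alpha>\<in>\<xi>. ball_of (snd Bn) (act \<alpha> \<xi>) \<noteq> fst Bn)"

definition Omega_F :: "'a set \<Rightarrow> ('a word set \<times> nat) set \<Rightarrow> 'a word set set" where
  "Omega_F A \<F> = {\<xi> \<in> CC A. \<forall>Bn\<in>\<F>. avoids \<xi> Bn}"

definition finite_type :: "'a set \<Rightarrow> 'a word set set \<Rightarrow> bool" where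
  "finite_type A \<Omega> \<longleftrightarrow>
     (\<exists>\<F>. finite \<F> \<and> (\<forall>Bn\<in>\<F>. is_ball A Bn) \<and> \<Omega> = Omega_F A \<F>)"

definition R_step :: "nat \<Rightarrow> 'a set \<Rightarrow> 'a word set set \<Rightarrow> bool" where
  "R_step R A \<Omega> \<longleftrightarrow>
     (\<exists>\<F>. finite \<F> \<and> (\<forall>Bn\<in>\<F>. is_ball A Bn \<and> snd Bn = R) \<and> \<Omega> = Omega_F A \<F>)"

text \<open>The symbol [B' <-a- B] is encoded as the triple (B', a, B).\<close>
type_synonym 'a nsym = "'a word set \<times> 'a \<times> 'a word set"

definition nball_alph :: "nat \<Rightarrow> 'a set \<Rightarrow> 'a word set set \<Rightarrow> 'a nsym set" where
  "nball_alph n A \<Omega> = {(ball_of n (act [(a, True)] \<xi>), a, ball_of n \<xi>) | \<xi> a.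
      \<xi> \<in> \<Omega> \<and> a \<in> A \<and> [(a, True)] \<in> \<xi>}"

text \<open>The letter [B_k <-s_k- B_{k-1}] of F^{[n:Omega]}, where B_{k-1} = (alpha.xi)^n,
  B_k = ((s alpha).xi)^n; for s = a^{-1} it is [B_{k-1} <-a- B_k]^{-1}.\<close>
definition phi_letter :: "nat \<Rightarrow> 'a word set \<Rightarrow> 'a letter \<Rightarrow> 'a word \<Rightarrow> 'a nsym letter" where
  "phi_letter n \<xi> s \<alpha> =
     (let B0 = ball_of n (act \<alpha> \<xi>); B1 = ball_of n (act (s # \<alpha>) \<xi>) in
      if snd s then ((B1, fst s, B0), True) else ((B0, fst s, B1), False))"

fun phi_word :: "nat \<Rightarrow> 'a word set \<Rightarrow> 'a word \<Rightarrow> 'a nsym word" where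
  "phi_word n \<xi> [] = []"
| "phi_word n \<xi> (s # \<alpha>) = fmult [phi_letter n \<xi> s \<alpha>] (phi_word n \<xi> \<alpha>)"

definition phi_n :: "nat \<Rightarrow> 'a word set \<Rightarrow> 'a nsym word set" where
  "phi_n n \<xi> = phi_word n \<xi> ` \<xi>"

definition Omega_n :: "nat \<Rightarrow> 'a word set set \<Rightarrow> 'a nsym word set set" where
  "Omega_n n \<Omega> = phi_n n ` \<Omega>"

definition Psi_n :: "'a nsym word \<Rightarrow> 'a word" where
  "Psi_n w = freduce (map (\<lambda>x. (fst (snd (fst x)), snd x)) w)"

definition psi_n :: "'a nsym word set \<Rightarrow> 'a word set" where
  "psi_n \<eta> = Psi_n ` \<eta>"

definition direct_dyn_equiv ::
  "'a set \<Rightarrow> 'a word set set \<Rightarrow> 'b set \<Rightarrow> 'b word set set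
     \<Rightarrow> ('a word set \<Rightarrow> 'b word set) \<Rightarrow> ('a word \<Rightarrow> 'b word) \<Rightarrow> bool" where
  "direct_dyn_equiv A \<Omega> B \<Omega>' \<phi> \<Psi> \<longleftrightarrow>
     fg_hom A B \<Psi> \<and>
     continuous_map (subtopology cantor_top \<Omega>) (subtopology cantor_top \<Omega>') \<phi> \<and>
     (\<forall>g\<in>fg A. \<phi> ` cdom \<Omega> g \<subseteq> cdom \<Omega>' (\<Psi> g)) \<and>
     (\<forall>g\<in>fg A. \<forall>x\<in>cdom \<Omega> (finv g). \<phi> (act g x) = act (\<Psi> g) (\<phi> x)) \<and>
     homeomorphic_map (subtopology cantor_top \<Omega>) (subtopology cantor_top \<Omega>') \<phi> \<and>
     (\<forall>g\<in>fg A. \<forall>g'\<in>fg A. g \<noteq> g' \<and> \<Psi> g = \<Psi> g' \<longrightarrow> cdom \<Omega> g \<inter> cdom \<Omega> g' = {}) \<and>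
     (\<forall>h\<in>fg B. cdom \<Omega>' h = (\<Union>g\<in>{g\<in>fg A. \<Psi> g = h}. \<phi> ` cdom \<Omega> g))"

end

theory Submission
  imports Defs
begin


lemma inv_inv[simp]: "inv_letter (inv_letter x) = x"
  by (simp add: inv_letter_def)
lemma inv_neq[simp]: "inv_letter x \<noteq> x" "x \<noteq> inv_letter x"
  by (auto simp: inv_letter_def prod_eq_iff)
lemma fst_inv[simp]: "fst (inv_letter x) = fst x" and snd_inv[simp]: "snd (inv_letter x) = (\<not> snd x)"
  by (auto simp: inv_letter_def)
lemma inv_eq_iff: "inv_letter x = y \<longleftrightarrow> x = inv_letter y"
  by auto

lemma reduced_Cons: "reduced (x # w) \<longleftrightarrow> reduced w \<and> (w = [] \<or> hd w \<noteq> inv_letter x)"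
  by (cases w) auto

lemma reduced_append: "reduced (u @ v) \<longleftrightarrow> reduced u \<and> reduced v \<and> (u = [] \<or> v = [] \<or> hd v \<noteq> inv_letter (last u))"
  by (induction u rule: reduced.induct) (auto simp: reduced_Cons)

lemma reduced_drop: "reduced w \<Longrightarrow> reduced (drop k w)"
  by (metis append_take_drop_id reduced_append)

lemma reduced_red_cons: "reduced w \<Longrightarrow> reduced (red_cons x w)"
  by (cases w) (auto simp: red_cons_def reduced_Cons)

lemma red_cons_cancel: "reduced w \<Longrightarrow> red_cons x (red_cons (inv_letter x) w) = w"
proof (cases w)
  case (Cons y ys)
  assume r: "reduced w"
  show ?thesis
  proof (cases "y = x")
    case True
    then show ?thesis using r Cons by (cases ys) (auto simp: red_cons_def)
  next
    case False
    then show ?thesis using Cons by (auto simp: red_cons_def)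
  qed
qed (simp add: red_cons_def)

lemma reduced_foldr: "reduced w \<Longrightarrow> reduced (foldr red_cons u w)"
  by (induction u) (auto simp: reduced_red_cons)

lemma freduce_reduced[simp]: "reduced (freduce w)"
  by (simp add: freduce_def reduced_foldr)

lemma freduce_Nil[simp]: "freduce [] = []" by (simp add: freduce_def)
lemma freduce_Cons: "freduce (x # w) = red_cons x (freduce w)"
  by (simp add: freduce_def)

lemma freduce_id: "reduced w \<Longrightarrow> freduce w = w"
  by (induction w) (auto simp: freduce_Cons reduced_Cons red_cons_def split: list.split)

lemma foldr_red_cons_red_cons:
  assumes "reduced r" "reduced w"
  shows "foldr red_cons (red_cons x r) w = red_cons x (foldr red_cons r w)"
proof (cases r)
  case Nil then show ?thesis by (simp add: red_cons_def)
next
  case (Cons y ys)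
  show ?thesis
  proof (cases "y = inv_letter x")
    case True
    have "red_cons x (foldr red_cons r w) = red_cons x (red_cons (inv_letter x) (foldr red_cons ys w))"
      using Cons True by simp
    also have "\<dots> = foldr red_cons ys w"
      by (rule red_cons_cancel) (use assms Cons in \<open>auto intro: reduced_foldr simp: reduced_Cons\<close>)
    finally show ?thesis using Cons True by (simp add: red_cons_def)
  next
    case False then show ?thesis using Cons by (simp add: red_cons_def)
  qed
qed

lemma foldr_freduce: "reduced w \<Longrightarrow> foldr red_cons (freduce u) w = foldr red_cons u w"
  by (induction u) (simp_all add: freduce_Cons foldr_red_cons_red_cons)

lemma freduce_append: "freduce (u @ v) = foldr red_cons u (freduce v)"
  by (simp add: freduce_def)

lemma freduce_freduce_left[simp]: "freduce (freduce u @ v) = freduce (u @ v)"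
  by (simp add: freduce_append foldr_freduce)

lemma freduce_freduce_right[simp]: "freduce (u @ freduce v) = freduce (u @ v)"
  by (simp add: freduce_append freduce_id)

lemma freduce_freduce[simp]: "freduce (freduce u) = freduce u"
  by (simp add: freduce_id)

lemma fmult_assoc: "fmult (fmult a b) c = fmult a (fmult b c)"
  unfolding fmult_def
  by (metis append_assoc freduce_freduce_left freduce_freduce_right)

lemma fmult_reduced[simp]: "reduced (fmult a b)"
  by (simp add: fmult_def)

lemma fmult_Nil_left: "reduced b \<Longrightarrow> fmult [] b = b"
  by (simp add: fmult_def freduce_id)
lemma fmult_Nil_right: "reduced b \<Longrightarrow> fmult b [] = b"
  by (simp add: fmult_def freduce_id)

lemma finv_Nil[simp]: "finv [] = []" by (simp add: finv_def)
lemma finv_Cons: "finv (x # w) = finv w @ [inv_letter x]" by (simp add: finv_def)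
lemma finv_append: "finv (u @ v) = finv v @ finv u" by (simp add: finv_def)
lemma finv_finv[simp]: "finv (finv w) = w" by (simp add: finv_def rev_map comp_def)
lemma length_finv[simp]: "length (finv w) = length w" by (simp add: finv_def)

lemma freduce_finv_cancel: "freduce (finv w @ w) = []"
proof (induction w)
  case (Cons x w)
  have "freduce (finv (x # w) @ x # w) = foldr red_cons (finv w) (freduce (inv_letter x # x # w))"
    by (simp add: finv_Cons freduce_append)
  also have "freduce (inv_letter x # x # w) = freduce w"
    using red_cons_cancel[of "freduce w" "inv_letter x"] by (simp add: freduce_Cons)
  finally show ?case using Cons by (simp add: freduce_append)
qed simp

lemma freduce_cancel_finv: "freduce (w @ finv w) = []"
  using freduce_finv_cancel[of "finv w"] by simp

lemma fmult_finv_right[simp]: "fmult w (finv w) = []"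
  by (simp add: fmult_def freduce_cancel_finv)
lemma fmult_finv_left[simp]: "fmult (finv w) w = []"
  by (simp add: fmult_def freduce_finv_cancel)

lemma last_finv: "w \<noteq> [] \<Longrightarrow> last (finv w) = inv_letter (hd w)"
  by (cases w) (auto simp: finv_Cons)
lemma hd_finv: "w \<noteq> [] \<Longrightarrow> hd (finv w) = inv_letter (last w)"
  by (simp add: finv_def hd_rev hd_map last_map)

lemma reduced_finv: "reduced w \<Longrightarrow> reduced (finv w)"
proof (induction w)
  case (Cons x w)
  have "reduced w" "w = [] \<or> hd w \<noteq> inv_letter x" using Cons.prems by (auto simp: reduced_Cons)
  moreover have "w \<noteq> [] \<Longrightarrow> last (finv w) = inv_letter (hd w)" by (rule last_finv)
  moreover have "reduced (finv w)" using Cons by (auto simp: reduced_Cons)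
  ultimately show ?case
    unfolding finv_Cons reduced_append by (metis inv_inv last_finv list.distinct(1) list.sel(1) length_finv length_0_conv reduced.simps(2))
qed simp

lemma fmult_left_inv_unique:
  assumes "reduced x" "reduced y" "fmult x y = []"
  shows "x = finv y"
proof -
  have "x = fmult x (fmult y (finv y))" using assms by (simp add: fmult_Nil_right)
  also have "\<dots> = fmult (fmult x y) (finv y)" by (simp add: fmult_assoc)
  also have "\<dots> = finv y" using assms by (simp add: fmult_Nil_left reduced_finv)
  finally show ?thesis .
qed

lemma fmult_right_inv_unique:
  assumes "reduced x" "reduced y" "fmult x y = []"
  shows "y = finv x"
proof -
  have "y = fmult [] y" using assms by (simp add: fmult_Nil_left)
  also have "\<dots> = fmult (fmult (finv x) x) y" by simp
  also have "\<dots> = fmult (finv x) (fmult x y)" by (rule fmult_assoc)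
  also have "\<dots> = finv x" using assms by (simp add: fmult_Nil_right reduced_finv)
  finally show ?thesis .
qed

lemma freduce_finv: "freduce (finv w) = finv (freduce w)"
proof -
  have h: "fmult (freduce w) (freduce (finv w)) = []"
    by (simp add: fmult_def freduce_cancel_finv)
  show ?thesis by (rule fmult_right_inv_unique[OF _ _ h]) simp_all
qed

lemma fmult_finv_freduce: "fmult b (finv (freduce w)) = fmult b (finv w)"
  by (metis fmult_def freduce_finv freduce_freduce_right)

lemma fmult_freduce_left: "fmult (freduce a) b = fmult a b"
  by (simp add: fmult_def)
lemma fmult_freduce_right: "fmult a (freduce b) = fmult a b"
  by (simp add: fmult_def)

lemma finv_fmult: "finv (fmult a b) = fmult (finv b) (finv a)"
  by (metis finv_append fmult_def freduce_finv)

lemma fmult_single: "reduced p \<Longrightarrow> fmult [x] p = red_cons x p"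
  by (simp add: fmult_def freduce_Cons freduce_id)

lemma fmult_single_Cons: "reduced (s # p) \<Longrightarrow> fmult [s] p = s # p"
  by (cases p) (auto simp: fmult_single reduced_Cons red_cons_def)

lemma set_red_cons: "set (red_cons x w) \<subseteq> insert x (set w)"
  by (auto simp: red_cons_def split: list.split)

lemma set_freduce: "set (freduce w) \<subseteq> set w"
  by (induction w) (auto simp: freduce_Cons dest: set_red_cons[THEN subsetD])

lemma length_red_cons: "length (red_cons x w) \<le> Suc (length w)"
  by (auto simp: red_cons_def split: list.split)

lemma length_freduce: "length (freduce w) \<le> length w"
  by (induction w) (auto simp: freduce_Cons intro: le_trans[OF length_red_cons])

lemma freduce_len_eq: "length (freduce w) = length w \<Longrightarrow> freduce w = w"
proof (induction w)
  case (Cons x w)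
  have "length (freduce (x # w)) \<le> Suc (length (freduce w))"
    by (simp add: freduce_Cons length_red_cons)
  with Cons.prems length_freduce[of w] have e: "length (freduce w) = length w" by simp
  with Cons.IH have fw: "freduce w = w" by simp
  show ?case
  proof (cases "\<exists>y ys. w = y # ys \<and> y = inv_letter x")
    case True
    then show ?thesis using Cons.prems fw by (auto simp: freduce_Cons red_cons_def)
  next
    case False
    then have "red_cons x w = x # w" by (cases w) (simp_all add: red_cons_def)
    then show ?thesis using fw by (simp add: freduce_Cons)
  qed
qed simp

lemma freduce_map:
  assumes m: "\<And>x. m (inv_letter x) = inv_letter (m x)"
  shows "freduce (map m (freduce w)) = freduce (map m w)"
proof (induction w)
  case (Cons x w)
  let ?r = "freduce w"
  have r: "reduced ?r" by simp
  show ?case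
  proof (cases "\<exists>ys. ?r = inv_letter x # ys")
    case True
    then obtain ys where ys: "?r = inv_letter x # ys" by blast
    have "freduce (map m (x # w)) = red_cons (m x) (freduce (map m ?r))"
      using Cons by (simp add: freduce_Cons)
    also have "\<dots> = red_cons (m x) (red_cons (inv_letter (m x)) (freduce (map m ys)))"
      using ys by (simp add: freduce_Cons m)
    also have "\<dots> = freduce (map m ys)" by (simp add: red_cons_cancel)
    finally show ?thesis using ys by (simp add: freduce_Cons red_cons_def)
  next
    case False
    then have "red_cons x ?r = x # ?r" by (auto simp: red_cons_def split: list.split)
    then show ?thesis using Cons by (simp add: freduce_Cons)
  qed
qed simp




definition mm :: "'a nsym letter \<Rightarrow> 'a letter" where
  "mm x = (fst (snd (fst x)), snd x)"

lemma mm_inv[simp]: "mm (inv_letter x) = inv_letter (mm x)"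
  by (simp add: mm_def inv_letter_def)

lemma Psi_n_mm: "Psi_n w = freduce (map mm w)"
  by (simp add: Psi_n_def mm_def[abs_def])

lemma Psi_hom: "Psi_n (fmult g h) = fmult (Psi_n g) (Psi_n h)"
proof -
  have "Psi_n (fmult g h) = freduce (map mm (g @ h))"
    by (simp add: Psi_n_mm fmult_def freduce_map)
  also have "\<dots> = fmult (Psi_n g) (Psi_n h)"
    by (simp add: Psi_n_mm fmult_def)
  finally show ?thesis .
qed

lemma Psi_reduced[simp]: "reduced (Psi_n g)" by (simp add: Psi_n_mm)

lemma Psi_Nil[simp]: "Psi_n [] = []" by (simp add: Psi_n_mm)

lemma Psi_finv: "Psi_n (finv g) = finv (Psi_n g)"
proof -
  have "fmult (Psi_n (finv g)) (Psi_n g) = []"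
    by (metis Psi_hom Psi_Nil fmult_finv_left)
  then show ?thesis by (rule fmult_left_inv_unique[rotated 2]) simp_all
qed

lemma Psi_single[simp]: "Psi_n [x] = [mm x]"
  by (simp add: Psi_n_mm freduce_Cons red_cons_def)

lemma map_mm_reduced: "reduced (map mm w) \<Longrightarrow> Psi_n w = map mm w"
  by (simp add: Psi_n_mm freduce_id)

lemma reduced_map_mm: "reduced (map mm w) \<Longrightarrow> reduced w"
  by (induction w rule: reduced.induct) (simp_all, metis mm_inv)

lemma act_act: "act \<delta> (act \<alpha> \<xi>) = act (\<delta> @ \<alpha>) \<xi>"
proof -
  have "fmult (fmult \<beta> (finv \<alpha>)) (finv \<delta>) = fmult \<beta> (finv (\<delta> @ \<alpha>))" for \<beta>
    by (simp add: fmult_def finv_append)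
  then show ?thesis by (auto simp: act_def image_image)
qed

lemma act_freduce: "act (freduce w) \<xi> = act w \<xi>"
  by (simp add: act_def fmult_finv_freduce)

lemma act_fmult: "act (fmult \<delta> \<alpha>) \<xi> = act (\<delta> @ \<alpha>) \<xi>"
  by (simp add: fmult_def act_freduce)

definition allred :: "'b word set \<Rightarrow> bool" where
  "allred \<xi> \<longleftrightarrow> (\<forall>w\<in>\<xi>. reduced w)"

lemma act_Nil: "allred \<xi> \<Longrightarrow> act [] \<xi> = \<xi>"
  by (auto simp: act_def allred_def fmult_Nil_right)

lemma allred_act[simp]: "allred (act \<alpha> \<xi>)"
  by (auto simp: act_def allred_def)

lemma mem_act:
  assumes "allred \<xi>" "reduced \<delta>"
  shows "\<delta> \<in> act \<alpha> \<xi> \<longleftrightarrow> fmult \<delta> \<alpha> \<in> \<xi>"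
proof
  assume "\<delta> \<in> act \<alpha> \<xi>"
  then obtain \<beta> where b: "\<beta> \<in> \<xi>" "\<delta> = fmult \<beta> (finv \<alpha>)" by (auto simp: act_def)
  then have "fmult \<delta> \<alpha> = fmult \<beta> (fmult (finv \<alpha>) \<alpha>)" by (simp add: fmult_assoc)
  also have "\<dots> = \<beta>" using assms b by (simp add: allred_def fmult_Nil_right)
  finally show "fmult \<delta> \<alpha> \<in> \<xi>" using b by simp
next
  assume "fmult \<delta> \<alpha> \<in> \<xi>"
  moreover have "fmult (fmult \<delta> \<alpha>) (finv \<alpha>) = \<delta>"
    using assms by (simp add: fmult_assoc fmult_Nil_right)
  ultimately show "\<delta> \<in> act \<alpha> \<xi>" unfolding act_def by (metis image_eqI)
qed

lemma fg_letters: "w \<in> fg A \<longleftrightarrow> reduced w \<and> set w \<subseteq> A \<times> UNIV"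
  by (auto simp: fg_def)

lemma fg_fmult: "a \<in> fg A \<Longrightarrow> b \<in> fg A \<Longrightarrow> fmult a b \<in> fg A"
  unfolding fg_def fmult_def using set_freduce[of "a @ b"] by (auto 0 3)

lemma fg_finv: "a \<in> fg A \<Longrightarrow> finv a \<in> fg A"
  using reduced_finv[of a] unfolding fg_def by (auto simp: finv_def)

lemma fg_drop: "a \<in> fg A \<Longrightarrow> drop k a \<in> fg A"
  unfolding fg_def using reduced_drop set_drop_subset by fastforce

lemma act_sub_fg: "\<xi> \<subseteq> fg A \<Longrightarrow> \<alpha> \<in> fg A \<Longrightarrow> act \<alpha> \<xi> \<subseteq> fg A"
  by (auto simp: act_def intro!: fg_fmult fg_finv)

lemma ball_act:
  assumes "\<xi> \<subseteq> fg A" "\<alpha> \<in> fg A"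
  shows "ball_of R (act \<alpha> \<xi>) = {\<delta> \<in> fg A. length \<delta> \<le> R \<and> fmult \<delta> \<alpha> \<in> \<xi>}"
proof -
  have ar: "allred \<xi>" using assms by (auto simp: allred_def fg_def)
  show ?thesis
    using act_sub_fg[OF assms] mem_act[OF ar] by (auto simp: ball_of_def fg_def)
qed

lemma ball_ball: "R \<le> N \<Longrightarrow> ball_of R (ball_of N S) = ball_of R S"
  by (auto simp: ball_of_def)




lemma act_Cons_freduce: "act (s # freduce w) \<xi> = act (s # w) \<xi>"
  by (metis act_freduce freduce_Cons freduce_freduce)

lemma phi_letter_freduce: "phi_letter n \<xi> s (freduce w) = phi_letter n \<xi> s w"
  by (simp add: phi_letter_def act_freduce act_Cons_freduce)

lemma act_cancel: "act (inv_letter s # s # w) \<xi> = act w \<xi>"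
proof -
  have "freduce (inv_letter s # s # w) = freduce w"
    using red_cons_cancel[of "freduce w" "inv_letter s"] by (simp add: freduce_Cons)
  then show ?thesis by (metis act_freduce)
qed

lemma phi_letter_inv: "phi_letter n \<xi> (inv_letter s) (s # w) = inv_letter (phi_letter n \<xi> s w)"
proof -
  obtain a e where s: "s = (a, e)" by (cases s)
  have "act ((a, \<not> e) # (a, e) # w) \<xi> = act w \<xi>" using act_cancel[of "(a,e)"] by (simp add: inv_letter_def)
  then show ?thesis using s by (cases e) (simp_all add: phi_letter_def Let_def inv_letter_def)
qed

lemma mm_phi_letter[simp]: "mm (phi_letter n \<xi> s w) = s"
  by (cases s) (simp add: phi_letter_def Let_def mm_def)

lemma phi_reduced[simp]: "reduced (phi_word n \<xi> w)"
  by (cases w) simp_all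

lemma phi_word_freduce: "phi_word n \<xi> (freduce w) = phi_word n \<xi> w"
proof (induction w)
  case (Cons s w)
  let ?r = "freduce w"
  show ?case
  proof (cases "\<exists>ys. ?r = inv_letter s # ys")
    case True
    then obtain ys where ys: "?r = inv_letter s # ys" by blast
    let ?z = "phi_letter n \<xi> (inv_letter s) ys"
    have "phi_word n \<xi> (s # w) = fmult [phi_letter n \<xi> s ?r] (phi_word n \<xi> ?r)"
      using Cons by (simp add: phi_letter_freduce)
    also have "phi_letter n \<xi> s ?r = inv_letter ?z"
      using ys phi_letter_inv[of n \<xi> "inv_letter s" ys] by simp
    also have "phi_word n \<xi> ?r = fmult [?z] (phi_word n \<xi> ys)" using ys by simp
    also have "fmult [inv_letter ?z] (fmult [?z] (phi_word n \<xi> ys)) = phi_word n \<xi> ys"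
      using red_cons_cancel[of "phi_word n \<xi> ys" "inv_letter ?z"] by (simp add: fmult_single reduced_red_cons)
    finally show ?thesis using ys by (simp add: freduce_Cons red_cons_def)
  next
    case False
    then have "red_cons s ?r = s # ?r" by (cases ?r) (simp_all add: red_cons_def)
    then show ?thesis using Cons by (simp add: freduce_Cons phi_letter_freduce)
  qed
qed simp

lemma phi_letter_append: "phi_letter n \<xi> s (u @ w) = phi_letter n (act w \<xi>) s u"
  by (simp add: phi_letter_def act_act)

lemma phi_word_append: "phi_word n \<xi> (u @ w) = fmult (phi_word n (act w \<xi>) u) (phi_word n \<xi> w)"
proof (induction u)
  case Nil then show ?case by (simp add: fmult_Nil_left)
next
  case (Cons s u)
  then show ?case by (simp add: phi_letter_append fmult_assoc)
qed

lemma Psi_phi: "Psi_n (phi_word n \<xi> w) = freduce w"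
proof (induction w)
  case (Cons s w)
  have "Psi_n (phi_word n \<xi> (s#w)) = fmult [s] (freduce w)"
    by (simp only: phi_word.simps Psi_hom Cons.IH Psi_single mm_phi_letter)
  also have "\<dots> = freduce (s # w)"
    by (metis append_Cons append_Nil fmult_def freduce_freduce_right)
  finally show ?case .
qed simp

lemma length_phi_le: "length (phi_word n \<xi> w) \<le> length w"
proof (induction w)
  case (Cons s w)
  then show ?case using length_red_cons[of "phi_letter n \<xi> s w" "phi_word n \<xi> w"]
    by (simp add: fmult_single)
qed simp

lemma length_map_Psi: "length (Psi_n w) \<le> length w"
  using length_freduce[of "map mm w"] by (simp add: Psi_n_mm)

lemma length_phi: "reduced w \<Longrightarrow> length (phi_word n \<xi> w) = length w"
  using length_phi_le[of n \<xi> w] length_map_Psi[of "phi_word n \<xi> w"]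
  by (simp add: Psi_phi freduce_id)

lemma phi_Cons:
  assumes "reduced (s # w)"
  shows "phi_word n \<xi> (s # w) = phi_letter n \<xi> s w # phi_word n \<xi> w"
proof -
  have w: "reduced w" using assms by (simp add: reduced_Cons)
  let ?x = "phi_letter n \<xi> s w" and ?p = "phi_word n \<xi> w"
  have "phi_word n \<xi> (s # w) = red_cons ?x ?p" by (simp add: fmult_single)
  moreover have "length (phi_word n \<xi> (s # w)) = Suc (length ?p)"
    using length_phi[OF assms] length_phi[OF w] by simp
  ultimately show ?thesis by (auto simp: red_cons_def split: list.splits if_splits)
qed

lemma map_mm_phi: "reduced w \<Longrightarrow> map mm (phi_word n \<xi> w) = w"
  by (induction w) (simp_all add: phi_Cons reduced_Cons del: phi_word.simps(2))

lemma phi_drop: "reduced w \<Longrightarrow> drop k (phi_word n \<xi> w) = phi_word n \<xi> (drop k w)"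
proof (induction w arbitrary: k)
  case (Cons s w)
  then show ?case by (cases k) (simp_all add: phi_Cons reduced_Cons del: phi_word.simps(2))
qed simp

lemma phi_Nil[simp]: "phi_word n \<xi> [] = []" by simp

lemma phi_inv:
  assumes "allred \<xi>"
  shows "phi_word n (act \<alpha> \<xi>) (finv \<alpha>) = finv (phi_word n \<xi> \<alpha>)"
proof -
  have "phi_word n \<xi> (finv \<alpha> @ \<alpha>) = []"
    by (metis freduce_finv_cancel phi_word_freduce phi_Nil)
  then have "fmult (phi_word n (act \<alpha> \<xi>) (finv \<alpha>)) (phi_word n \<xi> \<alpha>) = []"
    by (simp add: phi_word_append)
  then show ?thesis by (rule fmult_left_inv_unique[rotated 2]) simp_all
qed

lemma phi_cocycle:
  assumes "allred \<xi>"
  shows "fmult (phi_word n \<xi> \<gamma>) (finv (phi_word n \<xi> \<alpha>)) = phi_word n (act \<alpha> \<xi>) (fmult \<gamma> (finv \<alpha>))"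
proof -
  have "phi_word n (act \<alpha> \<xi>) (fmult \<gamma> (finv \<alpha>)) = phi_word n (act \<alpha> \<xi>) (\<gamma> @ finv \<alpha>)"
    by (simp add: fmult_def phi_word_freduce)
  also have "\<dots> = fmult (phi_word n (act (finv \<alpha>) (act \<alpha> \<xi>)) \<gamma>) (phi_word n (act \<alpha> \<xi>) (finv \<alpha>))"
    by (rule phi_word_append)
  also have "act (finv \<alpha>) (act \<alpha> \<xi>) = \<xi>"
    using assms by (metis act_act act_freduce act_Nil freduce_finv_cancel)
  finally show ?thesis using assms by (simp add: phi_inv)
qed

lemma act_phi:
  assumes "allred \<xi>"
  shows "act (phi_word n \<xi> \<alpha>) (phi_n n \<xi>) = phi_n n (act \<alpha> \<xi>)"
proof -
  have "act (phi_word n \<xi> \<alpha>) (phi_n n \<xi>) = (\<lambda>\<gamma>. phi_word n (act \<alpha> \<xi>) (fmult \<gamma> (finv \<alpha>))) ` \<xi>"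
    unfolding act_def[of "phi_word n \<xi> \<alpha>"] phi_n_def image_image using phi_cocycle[OF assms] by simp
  also have "\<dots> = phi_n n (act \<alpha> \<xi>)"
    unfolding phi_n_def by (simp add: image_image act_def[of \<alpha> \<xi>])
  finally show ?thesis .
qed

lemma Psi_phi_n: "allred \<xi> \<Longrightarrow> psi_n (phi_n n \<xi>) = \<xi>"
  by (auto simp: psi_n_def phi_n_def image_image Psi_phi allred_def freduce_id)




lemma cantor_topspace[simp]: "topspace cantor_top = UNIV"
  unfolding cantor_top_def topology_generated_by_topspace by auto

lemma topspace_sub[simp]: "topspace (subtopology cantor_top X) = X"
  by simp

lemma cyl_open1: "openin cantor_top {\<xi>. w \<in> \<xi>}"
  unfolding cantor_top_def by (rule topology_generated_by_Basis) auto
lemma cyl_open2: "openin cantor_top {\<xi>. w \<notin> \<xi>}"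
  unfolding cantor_top_def by (rule topology_generated_by_Basis) auto

lemma cyl_eq_open:
  assumes "finite W"
  shows "openin cantor_top {\<xi>. \<xi> \<inter> W = \<xi>0 \<inter> W}"
  using assms
proof (induction W)
  case empty
  then show ?case by (metis (mono_tags, lifting) Collect_cong UNIV_def cantor_topspace inf_bot_right openin_topspace)
next
  case (insert w W)
  have "{\<xi>. \<xi> \<inter> insert w W = \<xi>0 \<inter> insert w W} =
    {\<xi>. \<xi> \<inter> W = \<xi>0 \<inter> W} \<inter> (if w \<in> \<xi>0 then {\<xi>. w \<in> \<xi>} else {\<xi>. w \<notin> \<xi>})"
    by auto
  then show ?case using insert cyl_open1 cyl_open2 by (auto intro!: openin_Int)
qed

lemma open_crit:
  assumes "S \<subseteq> X" "\<And>\<xi>. \<xi> \<in> S \<Longrightarrow> \<exists>W. finite W \<and> (\<forall>\<xi>'\<in>X. \<xi>' \<inter> W = \<xi> \<inter> W \<longrightarrow> \<xi>' \<in> S)"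
  shows "openin (subtopology cantor_top X) S"
proof (subst openin_subopen, intro ballI)
  fix \<xi> assume xi: "\<xi> \<in> S"
  then obtain W where W: "finite W" "\<forall>\<xi>'\<in>X. \<xi>' \<inter> W = \<xi> \<inter> W \<longrightarrow> \<xi>' \<in> S" using assms(2) by blast
  define T where "T = {\<xi>'. \<xi>' \<inter> W = \<xi> \<inter> W} \<inter> X"
  have "openin (subtopology cantor_top X) T"
    unfolding openin_subtopology T_def using cyl_eq_open[OF W(1), of \<xi>] by (intro exI conjI) (assumption, rule refl)
  moreover have "\<xi> \<in> T" using xi assms(1) unfolding T_def by auto
  moreover have "T \<subseteq> S" using W(2) unfolding T_def by auto
  ultimately show "\<exists>T. openin (subtopology cantor_top X) T \<and> \<xi> \<in> T \<and> T \<subseteq> S" by blast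
qed

lemma open_crit_UNIV:
  assumes "\<And>\<xi>. \<xi> \<in> S \<Longrightarrow> \<exists>W. finite W \<and> (\<forall>\<xi>'. \<xi>' \<inter> W = \<xi> \<inter> W \<longrightarrow> \<xi>' \<in> S)"
  shows "openin cantor_top S"
proof -
  have "openin (subtopology cantor_top UNIV) S"
    by (rule open_crit) (use assms in auto)
  then show ?thesis by (metis cantor_topspace subtopology_topspace)
qed

lemma cont_crit:
  fixes f :: "'a word set \<Rightarrow> 'b word set"
  assumes "f ` X \<subseteq> Y"
    and "\<And>w. openin (subtopology cantor_top X) {\<xi>\<in>X. w \<in> f \<xi>}"
    and "\<And>w. openin (subtopology cantor_top X) {\<xi>\<in>X. w \<notin> f \<xi>}"
  shows "continuous_map (subtopology cantor_top X) (subtopology cantor_top Y) f"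
proof -
  define S0 :: "'b word set set set" where "S0 = range (\<lambda>w. {\<xi>. w \<in> \<xi>}) \<union> range (\<lambda>w. {\<xi>. w \<notin> \<xi>})"
  have ct: "cantor_top = topology_generated_by S0" by (simp add: cantor_top_def S0_def)
  have "continuous_map (subtopology cantor_top X) (topology_generated_by S0) f"
  proof (rule continuous_on_generated_topo)
    fix U assume "U \<in> S0"
    then obtain w where "U = {\<xi>. w \<in> \<xi>} \<or> U = {\<xi>. w \<notin> \<xi>}" unfolding S0_def by blast
    then show "openin (subtopology cantor_top X) (f -` U \<inter> topspace (subtopology cantor_top X))"
    proof
      assume "U = {\<xi>. w \<in> \<xi>}"
      then have "f -` U \<inter> topspace (subtopology cantor_top X) = {\<xi>\<in>X. w \<in> f \<xi>}" by auto
      then show ?thesis using assms(2) by simp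
    next
      assume "U = {\<xi>. w \<notin> \<xi>}"
      then have "f -` U \<inter> topspace (subtopology cantor_top X) = {\<xi>\<in>X. w \<notin> f \<xi>}" by auto
      then show ?thesis using assms(3) by simp
    qed
  next
    show "f ` topspace (subtopology cantor_top X) \<subseteq> \<Union>S0" unfolding S0_def by auto
  qed
  then have "continuous_map (subtopology cantor_top X) cantor_top f" by (simp add: ct)
  then show ?thesis using assms(1) by (auto simp: continuous_map_in_subtopology)
qed

lemma closed_crit:
  assumes "S \<subseteq> X" "closedin cantor_top X" "openin (subtopology cantor_top X) (X - S)"
  shows "closedin cantor_top S"
proof -
  have "closedin (subtopology cantor_top X) S"
    using assms by (simp add: closedin_def)
  then show ?thesis using assms(2) closedin_trans_full by blast
qed

lemma CC_closed: "closedin cantor_top (CC A)"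
proof -
  have "openin cantor_top (UNIV - CC A)"
  proof (rule open_crit_UNIV)
    fix \<xi> assume "\<xi> \<in> UNIV - CC A"
    then have "(\<exists>w\<in>\<xi>. w \<notin> fg A) \<or> [] \<notin> \<xi> \<or> (\<exists>w\<in>\<xi>. \<exists>k. drop k w \<notin> \<xi>)"
      by (auto simp: CC_def convex_def)
    then show "\<exists>W. finite W \<and> (\<forall>\<xi>'. \<xi>' \<inter> W = \<xi> \<inter> W \<longrightarrow> \<xi>' \<in> UNIV - CC A)"
    proof (elim disjE bexE exE)
      fix w assume "w \<in> \<xi>" "w \<notin> fg A"
      show ?thesis
      proof (intro exI[of _ "{w}"] conjI allI impI)
        fix \<xi>' assume "\<xi>' \<inter> {w} = \<xi> \<inter> {w}"
        then have "w \<in> \<xi>'" using \<open>w \<in> \<xi>\<close> by blast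
        then show "\<xi>' \<in> UNIV - CC A" using \<open>w \<notin> fg A\<close> by (auto simp: CC_def convex_def)
      qed simp
    next
      assume "[] \<notin> \<xi>"
      show ?thesis
      proof (intro exI[of _ "{[]}"] conjI allI impI)
        fix \<xi>' assume "\<xi>' \<inter> {[]} = \<xi> \<inter> {[]}"
        then have "[] \<notin> \<xi>'" using \<open>[] \<notin> \<xi>\<close> by blast
        then show "\<xi>' \<in> UNIV - CC A" by (simp add: CC_def convex_def)
      qed simp
    next
      fix w k assume "w \<in> \<xi>" "drop k w \<notin> \<xi>"
      show ?thesis
      proof (intro exI[of _ "{w, drop k w}"] conjI allI impI)
        fix \<xi>' assume "\<xi>' \<inter> {w, drop k w} = \<xi> \<inter> {w, drop k w}"
        then have "w \<in> \<xi>'" "drop k w \<notin> \<xi>'" using \<open>w \<in> \<xi>\<close> \<open>drop k w \<notin> \<xi>\<close> by blast+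
        then show "\<xi>' \<in> UNIV - CC A" by (auto simp: CC_def convex_def)
      qed simp
    qed
  qed
  then show ?thesis by (simp add: closedin_def)
qed




locale CS =
  fixes A :: "'a set" and \<Omega> :: "'a word set set"
  assumes finA: "finite A" and cs: "convex_subshift A \<Omega>"
begin

lemma Om_CC: "\<xi> \<in> \<Omega> \<Longrightarrow> \<xi> \<in> CC A"
  using cs by (auto simp: convex_subshift_def)

lemma Om_fg: "\<xi> \<in> \<Omega> \<Longrightarrow> \<xi> \<subseteq> fg A"
  using Om_CC by (auto simp: CC_def convex_def)

lemma Om_allred: "\<xi> \<in> \<Omega> \<Longrightarrow> allred \<xi>"
  using Om_fg by (auto simp: allred_def fg_def)

lemma Om_drop: "\<xi> \<in> \<Omega> \<Longrightarrow> w \<in> \<xi> \<Longrightarrow> drop k w \<in> \<xi>"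
  using Om_CC by (auto simp: CC_def convex_def)

lemma Om_Nil: "\<xi> \<in> \<Omega> \<Longrightarrow> [] \<in> \<xi>"
  using Om_CC by (auto simp: CC_def convex_def)

lemma Om_act: "\<xi> \<in> \<Omega> \<Longrightarrow> \<alpha> \<in> \<xi> \<Longrightarrow> act \<alpha> \<xi> \<in> \<Omega>"
  using cs by (auto simp: convex_subshift_def)

lemma Om_red: "\<xi> \<in> \<Omega> \<Longrightarrow> w \<in> \<xi> \<Longrightarrow> reduced w"
  using Om_fg by (auto simp: fg_def)

lemma phi_letter_in:
  assumes xi: "\<xi> \<in> \<Omega>" and sa: "s # \<alpha> \<in> \<xi>"
  shows "fst (phi_letter n \<xi> s \<alpha>) \<in> nball_alph n A \<Omega>"
proof -
  obtain a e where s: "s = (a, e)" by (cases s)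
  have red: "reduced (s # \<alpha>)" using Om_red[OF xi sa] .
  have "a \<in> A" using Om_fg[OF xi] sa s by (auto simp: fg_def)
  have al: "\<alpha> \<in> \<xi>" using Om_drop[OF xi sa, of 1] by simp
  show ?thesis
  proof (cases e)
    case True
    let ?\<zeta> = "act \<alpha> \<xi>"
    have z: "?\<zeta> \<in> \<Omega>" using Om_act[OF xi al] .
    have "act [(a, True)] ?\<zeta> = act (s # \<alpha>) \<xi>" using s True by (simp add: act_act)
    moreover have "[(a, True)] \<in> ?\<zeta>"
    proof -
      have "fmult [(a, True)] \<alpha> = s # \<alpha>"
        using red s True by (simp add: fmult_single_Cons)
      then show ?thesis using mem_act[OF Om_allred[OF xi], of "[(a,True)]" \<alpha>] sa by simp
    qed
    ultimately show ?thesis using s True z \<open>a \<in> A\<close>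
      unfolding nball_alph_def phi_letter_def Let_def by (auto intro!: exI[of _ ?\<zeta>])
  next
    case False
    let ?\<zeta> = "act (s # \<alpha>) \<xi>"
    have z: "?\<zeta> \<in> \<Omega>" using Om_act[OF xi sa] .
    have "act [(a, True)] ?\<zeta> = act \<alpha> \<xi>"
      using s False act_cancel[of s \<alpha> \<xi>] by (simp add: act_act inv_letter_def)
    moreover have "[(a, True)] \<in> ?\<zeta>"
    proof -
      have "fmult [(a, True)] (s # \<alpha>) = \<alpha>"
        using red s False by (simp add: fmult_single red_cons_def inv_letter_def)
      then show ?thesis using mem_act[OF Om_allred[OF xi], of "[(a,True)]" "s # \<alpha>"] al by simp
    qed
    ultimately show ?thesis using s False z \<open>a \<in> A\<close>
      unfolding nball_alph_def phi_letter_def Let_def by (auto intro!: exI[of _ ?\<zeta>])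
  qed
qed

lemma phi_fg:
  assumes xi: "\<xi> \<in> \<Omega>"
  shows "\<alpha> \<in> \<xi> \<Longrightarrow> phi_word n \<xi> \<alpha> \<in> fg (nball_alph n A \<Omega>)"
proof (induction \<alpha>)
  case Nil then show ?case by (simp add: fg_def)
next
  case (Cons s \<alpha>)
  have al: "\<alpha> \<in> \<xi>" using Om_drop[OF xi Cons.prems, of 1] by simp
  have "phi_word n \<xi> (s # \<alpha>) = phi_letter n \<xi> s \<alpha> # phi_word n \<xi> \<alpha>"
    using phi_Cons Om_red[OF xi Cons.prems] by blast
  moreover have "reduced (phi_word n \<xi> (s # \<alpha>))" by (rule phi_reduced)
  ultimately show ?case using Cons.IH[OF al] phi_letter_in[OF xi Cons.prems, of n]
    by (simp add: fg_def del: phi_word.simps(2))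
qed

lemma Omn_fg: "\<eta> \<in> Omega_n n \<Omega> \<Longrightarrow> \<eta> \<subseteq> fg (nball_alph n A \<Omega>)"
  using phi_fg by (auto simp: Omega_n_def phi_n_def)

lemma psi_phi: "\<xi> \<in> \<Omega> \<Longrightarrow> psi_n (phi_n n \<xi>) = \<xi>"
  by (simp add: Psi_phi_n Om_allred)

lemma Psi_fg: "g \<in> fg (nball_alph n A \<Omega>) \<Longrightarrow> Psi_n g \<in> fg A"
proof -
  assume g: "g \<in> fg (nball_alph n A \<Omega>)"
  have "fst x \<in> nball_alph n A \<Omega> \<Longrightarrow> fst (mm x) \<in> A" for x
    by (auto simp: nball_alph_def mm_def)
  then have "fst ` set (map mm g) \<subseteq> A" using g by (auto simp: fg_def)
  then show ?thesis using set_freduce[of "map mm g"] by (auto 0 4 simp: fg_def Psi_n_mm)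
qed

lemma W_finite: "finite {w :: 'b word. set w \<subseteq> B \<times> UNIV \<and> length w \<le> k}" if "finite B" for B :: "'b set"
  using finite_lists_length_le[of "B \<times> (UNIV :: bool set)" k] that by simp

lemma fg_len_finite: "finite B \<Longrightarrow> finite {w \<in> fg B. length w \<le> k}"
  by (rule finite_subset[OF _ W_finite[of B k]]) (auto simp: fg_def)

lemma finite_nball: "finite (nball_alph n A \<Omega>)"
proof -
  let ?W = "Pow {w \<in> fg A. length w \<le> n}"
  have "nball_alph n A \<Omega> \<subseteq> ?W \<times> A \<times> ?W"
  proof
    fix x assume "x \<in> nball_alph n A \<Omega>"
    then obtain \<xi> a where x: "x = (ball_of n (act [(a, True)] \<xi>), a, ball_of n \<xi>)"
      "\<xi> \<in> \<Omega>" "a \<in> A" "[(a, True)] \<in> \<xi>" by (auto simp: nball_alph_def)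
    have "act [(a, True)] \<xi> \<subseteq> fg A"
      using x by (intro act_sub_fg Om_fg) (auto simp: fg_def)
    then show "x \<in> ?W \<times> A \<times> ?W" using x Om_fg[OF x(2)] by (auto simp: ball_of_def)
  qed
  moreover have "finite (?W \<times> A \<times> ?W)" using fg_len_finite[OF finA] finA by simp
  ultimately show ?thesis by (rule finite_subset)
qed


lemma mem_phi_n:
  assumes "\<xi> \<in> \<Omega>"
  shows "\<beta> \<in> phi_n n \<xi> \<longleftrightarrow> map mm \<beta> \<in> \<xi> \<and> phi_word n \<xi> (map mm \<beta>) = \<beta>"
proof
  assume "\<beta> \<in> phi_n n \<xi>"
  then obtain \<alpha> where "\<alpha> \<in> \<xi>" "\<beta> = phi_word n \<xi> \<alpha>" by (auto simp: phi_n_def)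
  moreover then have "map mm \<beta> = \<alpha>" using map_mm_phi Om_red[OF assms] by blast
  ultimately show "map mm \<beta> \<in> \<xi> \<and> phi_word n \<xi> (map mm \<beta>) = \<beta>" by simp
next
  assume "map mm \<beta> \<in> \<xi> \<and> phi_word n \<xi> (map mm \<beta>) = \<beta>"
  then show "\<beta> \<in> phi_n n \<xi>" unfolding phi_n_def by (metis image_eqI)
qed

definition DD :: "nat \<Rightarrow> 'a word \<Rightarrow> 'a word set" where
  "DD n \<alpha> = {fmult \<delta> (drop k \<alpha>) | \<delta> k. \<delta> \<in> fg A \<and> length \<delta> \<le> n}"

lemma DD_finite: "finite (DD n \<alpha>)"
proof -
  have "DD n \<alpha> \<subseteq> (\<lambda>(\<delta>,k). fmult \<delta> (drop k \<alpha>)) ` ({\<delta> \<in> fg A. length \<delta> \<le> n} \<times> {0..length \<alpha>})"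
  proof
    fix w assume "w \<in> DD n \<alpha>"
    then obtain \<delta> k where w: "w = fmult \<delta> (drop k \<alpha>)" "\<delta> \<in> fg A" "length \<delta> \<le> n"
      by (auto simp: DD_def)
    have "drop k \<alpha> = drop (min k (length \<alpha>)) \<alpha>" by (simp add: min_def)
    then show "w \<in> (\<lambda>(\<delta>,k). fmult \<delta> (drop k \<alpha>)) ` ({\<delta> \<in> fg A. length \<delta> \<le> n} \<times> {0..length \<alpha>})"
      using w by (intro image_eqI[of _ _ "(\<delta>, min k (length \<alpha>))"]) auto
  qed
  moreover have "finite ({\<delta> \<in> fg A. length \<delta> \<le> n} \<times> {0..length \<alpha>})"
    using fg_len_finite[OF finA] by simp
  ultimately show ?thesis using finite_subset by blast
qed

lemma phi_local0:
  "(\<forall>k. ball_of n (act (drop k \<alpha>) \<xi>) = ball_of n (act (drop k \<alpha>) \<xi>')) \<Longrightarrow>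
    phi_word n \<xi> \<alpha> = phi_word n \<xi>' \<alpha>"
proof (induction \<alpha>)
  case (Cons s \<alpha>)
  have "\<forall>k. ball_of n (act (drop k \<alpha>) \<xi>) = ball_of n (act (drop k \<alpha>) \<xi>')"
  proof
    fix k show "ball_of n (act (drop k \<alpha>) \<xi>) = ball_of n (act (drop k \<alpha>) \<xi>')"
      using Cons.prems[rule_format, of "Suc k"] by simp
  qed
  moreover have "ball_of n (act \<alpha> \<xi>) = ball_of n (act \<alpha> \<xi>')"
    using Cons.prems[rule_format, of 1] by simp
  moreover have "ball_of n (act (s # \<alpha>) \<xi>) = ball_of n (act (s # \<alpha>) \<xi>')"
    using Cons.prems[rule_format, of 0] by simp
  ultimately show ?case using Cons.IH by (simp add: phi_letter_def)
qed simp

lemma phi_local: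
  assumes "\<xi> \<subseteq> fg A" "\<xi>' \<subseteq> fg A" "\<alpha> \<in> fg A" "\<forall>w\<in>DD n \<alpha>. w \<in> \<xi> \<longleftrightarrow> w \<in> \<xi>'"
  shows "phi_word n \<xi> \<alpha> = phi_word n \<xi>' \<alpha>"
proof (rule phi_local0, rule allI)
  fix k
  have d: "drop k \<alpha> \<in> fg A" using assms(3) by (rule fg_drop)
  show "ball_of n (act (drop k \<alpha>) \<xi>) = ball_of n (act (drop k \<alpha>) \<xi>')"
    unfolding ball_act[OF assms(1) d] ball_act[OF assms(2) d]
    using assms(4) unfolding DD_def by blast
qed

lemma Omn_elem: "\<eta> \<in> Omega_n n \<Omega> \<Longrightarrow> \<exists>\<xi>\<in>\<Omega>. \<eta> = phi_n n \<xi>"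
  by (auto simp: Omega_n_def)

lemma psi_cont: "continuous_map (subtopology cantor_top (Omega_n n \<Omega>)) (subtopology cantor_top \<Omega>) psi_n"
proof (rule cont_crit)
  show "psi_n ` Omega_n n \<Omega> \<subseteq> \<Omega>" using psi_phi by (auto simp: Omega_n_def)
next
  fix w :: "'a word"
  show "openin (subtopology cantor_top (Omega_n n \<Omega>)) {\<eta> \<in> Omega_n n \<Omega>. w \<in> psi_n \<eta>}"
  proof (rule open_crit)
    fix \<eta> assume "\<eta> \<in> {\<eta> \<in> Omega_n n \<Omega>. w \<in> psi_n \<eta>}"
    then obtain \<beta> where b: "\<beta> \<in> \<eta>" "Psi_n \<beta> = w" by (auto simp: psi_n_def)
    show "\<exists>W. finite W \<and> (\<forall>\<eta>'\<in>Omega_n n \<Omega>. \<eta>' \<inter> W = \<eta> \<inter> W \<longrightarrow> \<eta>' \<in> {\<eta> \<in> Omega_n n \<Omega>. w \<in> psi_n \<eta>})"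
    proof (intro exI[of _ "{\<beta>}"] conjI ballI impI)
      fix \<eta>' assume "\<eta>' \<in> Omega_n n \<Omega>" "\<eta>' \<inter> {\<beta>} = \<eta> \<inter> {\<beta>}"
      then show "\<eta>' \<in> {\<eta> \<in> Omega_n n \<Omega>. w \<in> psi_n \<eta>}" using b by (auto simp: psi_n_def)
    qed simp
  qed auto
next
  fix w :: "'a word"
  let ?A' = "nball_alph n A \<Omega>"
  let ?W = "{\<beta>. set \<beta> \<subseteq> ?A' \<times> (UNIV :: bool set) \<and> length \<beta> \<le> length w}"
  have key: "\<beta> \<in> ?W" if h: "\<eta> \<in> Omega_n n \<Omega>" "\<beta> \<in> \<eta>" "Psi_n \<beta> = w" for \<eta> \<beta>
  proof -
    obtain \<xi> where xi: "\<xi> \<in> \<Omega>" "\<eta> = phi_n n \<xi>" using Omn_elem[OF h(1)] by blast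
    then obtain \<alpha> where a: "\<alpha> \<in> \<xi>" "\<beta> = phi_word n \<xi> \<alpha>" using h(2) by (auto simp: phi_n_def)
    have "length \<beta> = length \<alpha>" using a length_phi Om_red[OF xi(1)] by blast
    moreover have "Psi_n \<beta> = \<alpha>" using a Psi_phi freduce_id Om_red[OF xi(1)] by metis
    moreover have "\<beta> \<in> fg ?A'" using phi_fg[OF xi(1) a(1)] a by simp
    ultimately show ?thesis using h(3) by (auto simp: fg_def)
  qed
  show "openin (subtopology cantor_top (Omega_n n \<Omega>)) {\<eta> \<in> Omega_n n \<Omega>. w \<notin> psi_n \<eta>}"
  proof (rule open_crit)
    fix \<eta> assume e: "\<eta> \<in> {\<eta> \<in> Omega_n n \<Omega>. w \<notin> psi_n \<eta>}"
    show "\<exists>W. finite W \<and> (\<forall>\<eta>'\<in>Omega_n n \<Omega>. \<eta>' \<inter> W = \<eta> \<inter> W \<longrightarrow> \<eta>' \<in> {\<eta> \<in> Omega_n n \<Omega>. w \<notin> psi_n \<eta>})"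
    proof (intro exI[of _ ?W] conjI ballI impI)
      show "finite ?W" using W_finite[OF finite_nball] by blast
      fix \<eta>' assume e': "\<eta>' \<in> Omega_n n \<Omega>" "\<eta>' \<inter> ?W = \<eta> \<inter> ?W"
      show "\<eta>' \<in> {\<eta> \<in> Omega_n n \<Omega>. w \<notin> psi_n \<eta>}"
      proof (simp add: e'(1), rule notI)
        assume "w \<in> psi_n \<eta>'"
        then obtain \<beta> where b: "\<beta> \<in> \<eta>'" "Psi_n \<beta> = w" by (auto simp: psi_n_def)
        then have "\<beta> \<in> ?W" using key e'(1) by blast
        then have "\<beta> \<in> \<eta>" using e'(2) b(1) by blast
        then show False using e b(2) by (auto simp: psi_n_def)
      qed
    qed
  qed auto
qed

lemma phi_cont: "continuous_map (subtopology cantor_top \<Omega>) (subtopology cantor_top (Omega_n n \<Omega>)) (phi_n n)"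
proof (rule cont_crit)
  show "phi_n n ` \<Omega> \<subseteq> Omega_n n \<Omega>" by (auto simp: Omega_n_def)
next
  fix \<beta> :: "'a nsym word"
  let ?a = "map mm \<beta>"
  have key: "\<beta> \<in> phi_n n \<xi>'" if "\<xi> \<in> \<Omega>" "\<xi>' \<in> \<Omega>" "\<beta> \<in> phi_n n \<xi>" "\<xi>' \<inter> ({?a} \<union> DD n ?a) = \<xi> \<inter> ({?a} \<union> DD n ?a)"
    for \<xi> \<xi>'
  proof -
    have 1: "?a \<in> \<xi>" "phi_word n \<xi> ?a = \<beta>" using that(3) mem_phi_n[OF that(1)] by auto
    have "?a \<in> \<xi>'" using 1 that(4) by blast
    moreover have "phi_word n \<xi>' ?a = phi_word n \<xi> ?a"
      using Om_fg[OF that(1)] Om_fg[OF that(2)] 1 that(4) by (intro phi_local) blast+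
    ultimately show ?thesis using 1 mem_phi_n[OF that(2)] by simp
  qed
  show "openin (subtopology cantor_top \<Omega>) {\<xi> \<in> \<Omega>. \<beta> \<in> phi_n n \<xi>}"
  proof (rule open_crit)
    fix \<xi> assume "\<xi> \<in> {\<xi> \<in> \<Omega>. \<beta> \<in> phi_n n \<xi>}"
    then show "\<exists>W. finite W \<and> (\<forall>\<xi>'\<in>\<Omega>. \<xi>' \<inter> W = \<xi> \<inter> W \<longrightarrow> \<xi>' \<in> {\<xi> \<in> \<Omega>. \<beta> \<in> phi_n n \<xi>})"
      using key DD_finite by (intro exI[of _ "{?a} \<union> DD n ?a"]) auto
  qed auto
  show "openin (subtopology cantor_top \<Omega>) {\<xi> \<in> \<Omega>. \<beta> \<notin> phi_n n \<xi>}"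
  proof (rule open_crit)
    fix \<xi> assume "\<xi> \<in> {\<xi> \<in> \<Omega>. \<beta> \<notin> phi_n n \<xi>}"
    then have xi: "\<xi> \<in> \<Omega>" "\<beta> \<notin> phi_n n \<xi>" by auto
    show "\<exists>W. finite W \<and> (\<forall>\<xi>'\<in>\<Omega>. \<xi>' \<inter> W = \<xi> \<inter> W \<longrightarrow> \<xi>' \<in> {\<xi> \<in> \<Omega>. \<beta> \<notin> phi_n n \<xi>})"
    proof (intro exI[of _ "{?a} \<union> DD n ?a"] conjI ballI impI)
      show "finite ({?a} \<union> DD n ?a)" using DD_finite by simp
      fix \<xi>' assume x': "\<xi>' \<in> \<Omega>" "\<xi>' \<inter> ({?a} \<union> DD n ?a) = \<xi> \<inter> ({?a} \<union> DD n ?a)"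
      have "\<beta> \<notin> phi_n n \<xi>'"
      proof
        assume "\<beta> \<in> phi_n n \<xi>'"
        then have "\<beta> \<in> phi_n n \<xi>" using key[OF x'(1) xi(1)] x'(2) by simp
        then show False using xi by simp
      qed
      then show "\<xi>' \<in> {\<xi> \<in> \<Omega>. \<beta> \<notin> phi_n n \<xi>}" using x' by simp
    qed
  qed auto
qed


lemma Psi_phi_red: "\<xi> \<in> \<Omega> \<Longrightarrow> \<alpha> \<in> \<xi> \<Longrightarrow> Psi_n (phi_word n \<xi> \<alpha>) = \<alpha>"
  using Psi_phi freduce_id Om_red by metis

lemma part1: "direct_dyn_equiv (nball_alph n A \<Omega>) (Omega_n n \<Omega>) A \<Omega> psi_n Psi_n"
proof -
  let ?A' = "nball_alph n A \<Omega>" and ?O' = "Omega_n n \<Omega>"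
  have hom: "fg_hom ?A' A Psi_n" unfolding fg_hom_def using Psi_fg Psi_hom by blast
  have homeo: "homeomorphic_map (subtopology cantor_top ?O') (subtopology cantor_top \<Omega>) psi_n"
    unfolding homeomorphic_map_maps homeomorphic_maps_def
  proof (intro exI[of _ "phi_n n"] conjI ballI)
    show "continuous_map (subtopology cantor_top ?O') (subtopology cantor_top \<Omega>) psi_n" by (rule psi_cont)
    show "continuous_map (subtopology cantor_top \<Omega>) (subtopology cantor_top ?O') (phi_n n)" by (rule phi_cont)
    fix x assume "x \<in> topspace (subtopology cantor_top ?O')"
    then obtain \<xi> where "\<xi> \<in> \<Omega>" "x = phi_n n \<xi>" using Omn_elem by auto
    then show "phi_n n (psi_n x) = x" by (simp add: psi_phi)
  next
    fix y assume "y \<in> topspace (subtopology cantor_top \<Omega>)"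
    then show "psi_n (phi_n n y) = y" by (simp add: psi_phi)
  qed
  have cont: "continuous_map (subtopology cantor_top ?O') (subtopology cantor_top \<Omega>) psi_n"
    by (rule psi_cont)
  have c3: "\<forall>g\<in>fg ?A'. psi_n ` cdom ?O' g \<subseteq> cdom \<Omega> (Psi_n g)"
  proof (intro ballI subsetI)
    fix g x assume g: "g \<in> fg ?A'" and "x \<in> psi_n ` cdom ?O' g"
    then obtain \<eta> where e: "\<eta> \<in> ?O'" "finv g \<in> \<eta>" "x = psi_n \<eta>" by (auto simp: cdom_def)
    then obtain \<xi> where xi: "\<xi> \<in> \<Omega>" "\<eta> = phi_n n \<xi>" using Omn_elem by blast
    have "x = \<xi>" using e xi psi_phi by simp
    moreover have "Psi_n (finv g) \<in> psi_n \<eta>" using e by (simp add: psi_n_def)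
    ultimately show "x \<in> cdom \<Omega> (Psi_n g)" using xi e by (simp add: cdom_def Psi_finv)
  qed
  have c4: "\<forall>g\<in>fg ?A'. \<forall>x\<in>cdom ?O' (finv g). psi_n (act g x) = act (Psi_n g) (psi_n x)"
    by (simp add: psi_n_def act_def image_image Psi_hom Psi_finv)
  have c6: "\<forall>g\<in>fg ?A'. \<forall>g'\<in>fg ?A'. g \<noteq> g' \<and> Psi_n g = Psi_n g' \<longrightarrow> cdom ?O' g \<inter> cdom ?O' g' = {}"
  proof (intro ballI impI)
    fix g g' assume gg: "g \<in> fg ?A'" "g' \<in> fg ?A'" "g \<noteq> g' \<and> Psi_n g = Psi_n g'"
    show "cdom ?O' g \<inter> cdom ?O' g' = {}"
    proof (rule ccontr)
      assume "cdom ?O' g \<inter> cdom ?O' g' \<noteq> {}"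
      then obtain \<eta> where e: "\<eta> \<in> ?O'" "finv g \<in> \<eta>" "finv g' \<in> \<eta>" by (auto simp: cdom_def)
      then obtain \<xi> where xi: "\<xi> \<in> \<Omega>" "\<eta> = phi_n n \<xi>" using Omn_elem by blast
      obtain \<alpha> where a: "\<alpha> \<in> \<xi>" "finv g = phi_word n \<xi> \<alpha>" using e xi by (auto simp: phi_n_def)
      obtain \<alpha>' where a': "\<alpha>' \<in> \<xi>" "finv g' = phi_word n \<xi> \<alpha>'" using e xi by (auto simp: phi_n_def)
      have "finv (Psi_n g) = \<alpha>" using a Psi_phi_red[OF xi(1) a(1), of n] by (simp add: Psi_finv[symmetric])
      moreover have "finv (Psi_n g') = \<alpha>'" using a' Psi_phi_red[OF xi(1) a'(1), of n] by (simp add: Psi_finv[symmetric])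
      ultimately have "finv g = finv g'" using a a' gg by simp
      then have "g = g'" by (metis finv_finv)
      then show False using gg by simp
    qed
  qed
  have c7: "\<forall>h\<in>fg A. cdom \<Omega> h = (\<Union>g\<in>{g\<in>fg ?A'. Psi_n g = h}. psi_n ` cdom ?O' g)"
  proof (intro ballI equalityI subsetI)
    fix h x assume h: "h \<in> fg A" and "x \<in> cdom \<Omega> h"
    then have x: "x \<in> \<Omega>" "finv h \<in> x" by (auto simp: cdom_def)
    let ?b = "phi_word n x (finv h)"
    have b: "?b \<in> fg ?A'" using phi_fg[OF x] .
    have "Psi_n (finv ?b) = h" using Psi_phi_red[OF x, of n] by (simp add: Psi_finv)
    moreover have "finv ?b \<in> fg ?A'" using b by (rule fg_finv)
    moreover have "phi_n n x \<in> cdom ?O' (finv ?b)"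
      using x by (auto simp: cdom_def Omega_n_def phi_n_def)
    moreover have "psi_n (phi_n n x) = x" using x psi_phi by simp
    ultimately show "x \<in> (\<Union>g\<in>{g\<in>fg ?A'. Psi_n g = h}. psi_n ` cdom ?O' g)" by force
  next
    fix h x assume "h \<in> fg A" "x \<in> (\<Union>g\<in>{g\<in>fg ?A'. Psi_n g = h}. psi_n ` cdom ?O' g)"
    then obtain g where "g \<in> fg ?A'" "Psi_n g = h" "x \<in> psi_n ` cdom ?O' g" by blast
    then show "x \<in> cdom \<Omega> h" using c3 by blast
  qed
  show ?thesis unfolding direct_dyn_equiv_def
    using hom cont c3 c4 homeo c6 c7 by blast
qed

end



lemma gW_finite: "finite B \<Longrightarrow> finite {w :: 'b word. set w \<subseteq> B \<times> UNIV \<and> length w \<le> k}"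
  using finite_lists_length_le[of "B \<times> (UNIV :: bool set)" k] by simp

lemma gfg_len_finite: "finite B \<Longrightarrow> finite {w \<in> fg B. length w \<le> k}"
  by (rule finite_subset[OF _ gW_finite[of B k]]) (auto simp: fg_def)

lemma Omega_F_closed:
  assumes fin: "finite B"
  shows "closedin cantor_top (Omega_F B F)"
proof (rule closed_crit[of _ "CC B"])
  show "Omega_F B F \<subseteq> CC B" by (auto simp: Omega_F_def)
  show "closedin cantor_top (CC B)" by (rule CC_closed)
  show "openin (subtopology cantor_top (CC B)) (CC B - Omega_F B F)"
  proof (rule open_crit)
    fix \<xi> assume "\<xi> \<in> CC B - Omega_F B F"
    then obtain Bn \<alpha> where x: "\<xi> \<in> CC B" "Bn \<in> F" "\<alpha> \<in> \<xi>" "ball_of (snd Bn) (act \<alpha> \<xi>) = fst Bn"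
      by (auto simp: Omega_F_def avoids_def)
    have xf: "\<xi> \<subseteq> fg B" using x(1) by (auto simp: CC_def convex_def)
    have af: "\<alpha> \<in> fg B" using xf x(3) by auto
    let ?W = "{\<alpha>} \<union> (\<lambda>\<delta>. fmult \<delta> \<alpha>) ` {\<delta> \<in> fg B. length \<delta> \<le> snd Bn}"
    show "\<exists>W. finite W \<and> (\<forall>\<xi>'\<in>CC B. \<xi>' \<inter> W = \<xi> \<inter> W \<longrightarrow> \<xi>' \<in> CC B - Omega_F B F)"
    proof (intro exI[of _ ?W] conjI ballI impI)
      show "finite ?W" using gfg_len_finite[OF fin] by simp
      fix \<xi>' assume x': "\<xi>' \<in> CC B" "\<xi>' \<inter> ?W = \<xi> \<inter> ?W"
      have xf': "\<xi>' \<subseteq> fg B" using x'(1) by (auto simp: CC_def convex_def)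
      have "\<alpha> \<in> \<xi>'" using x' x(3) by blast
      moreover have "ball_of (snd Bn) (act \<alpha> \<xi>') = ball_of (snd Bn) (act \<alpha> \<xi>)"
        unfolding ball_act[OF xf af] ball_act[OF xf' af] using x'(2) by blast
      ultimately show "\<xi>' \<in> CC B - Omega_F B F"
        using x' x by (auto simp: Omega_F_def avoids_def)
    qed
  qed auto
qed

definition src :: "'a nsym letter \<Rightarrow> 'a word set" where
  "src x = (if snd x then snd (snd (fst x)) else fst (fst x))"
definition tgt :: "'a nsym letter \<Rightarrow> 'a word set" where
  "tgt x = (if snd x then fst (fst x) else snd (snd (fst x)))"

lemma src_inv[simp]: "src (inv_letter x) = tgt x"
  by (simp add: src_def tgt_def inv_letter_def)

lemma src_lz: "allred \<zeta> \<Longrightarrow> src (phi_letter n \<zeta> s []) = ball_of n \<zeta>"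
  by (simp add: src_def phi_letter_def Let_def act_Nil)
lemma tgt_lz: "tgt (phi_letter n \<zeta> s []) = ball_of n (act [s] \<zeta>)"
  by (simp add: tgt_def phi_letter_def Let_def)

lemma phi_word_single: "phi_word n \<zeta> [s] = [phi_letter n \<zeta> s []]"
  by (simp add: fmult_def freduce_Cons red_cons_def)

lemma phi_single_mem:
  assumes "allred \<zeta>"
  shows "[x] \<in> phi_n n \<zeta> \<longleftrightarrow> (\<exists>s. [s] \<in> \<zeta> \<and> x = phi_letter n \<zeta> s [])"
proof
  assume "[x] \<in> phi_n n \<zeta>"
  then obtain \<alpha> where a: "\<alpha> \<in> \<zeta>" "[x] = phi_word n \<zeta> \<alpha>" by (auto simp: phi_n_def)
  have l: "length (phi_word n \<zeta> \<alpha>) = length \<alpha>" using length_phi[of \<alpha> n \<zeta>] a assms by (simp add: allred_def)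
  have "length \<alpha> = 1" using l a(2) by (metis One_nat_def length_Cons list.size(3))
  then obtain s where "\<alpha> = [s]" by (cases \<alpha>) auto
  then show "\<exists>s. [s] \<in> \<zeta> \<and> x = phi_letter n \<zeta> s []" using a by (metis list.inject phi_word_single)
next
  assume "\<exists>s. [s] \<in> \<zeta> \<and> x = phi_letter n \<zeta> s []"
  then obtain s where "[s] \<in> \<zeta>" "x = phi_letter n \<zeta> s []" by blast
  then show "[x] \<in> phi_n n \<zeta>" unfolding phi_n_def by (metis image_eqI phi_word_single)
qed

lemma geod:
  assumes cv: "\<forall>w\<in>\<xi>. \<forall>k. drop k w \<in> \<xi>" and a: "\<alpha> \<in> \<xi>" "reduced \<alpha>"
    and d: "reduced (\<delta>' @ [t])" and m: "fmult (\<delta>' @ [t]) \<alpha> \<in> \<xi>"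
  shows "fmult [t] \<alpha> \<in> \<xi>"
proof (cases "\<exists>\<alpha>'. \<alpha> = inv_letter t # \<alpha>'")
  case True
  then obtain \<alpha>' where "\<alpha> = inv_letter t # \<alpha>'" by blast
  moreover then have "fmult [t] \<alpha> = \<alpha>'" using a by (simp add: fmult_single red_cons_def)
  ultimately show ?thesis using cv a by (metis drop_Suc drop_0 list.sel(3))
next
  case False
  then have h: "\<alpha> = [] \<or> hd \<alpha> \<noteq> inv_letter t" by (cases \<alpha>) auto
  have r: "reduced ((\<delta>' @ [t]) @ \<alpha>)" by (rule iffD2[OF reduced_append]) (use d a h in auto)
  then have "fmult (\<delta>' @ [t]) \<alpha> = \<delta>' @ t # \<alpha>" by (simp add: fmult_def freduce_id)
  moreover have "reduced (t # \<alpha>)" using h a(2) by (simp only: reduced_Cons)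
  then have "fmult [t] \<alpha> = t # \<alpha>" by (rule fmult_single_Cons)
  moreover have "drop (length \<delta>') (\<delta>' @ t # \<alpha>) = t # \<alpha>" by simp
  ultimately show ?thesis using cv m by metis
qed

lemma len1_drop: "length w \<le> 1 \<Longrightarrow> drop k w = w \<or> drop k w = []"
  by (cases w; cases k) auto


locale CS2 = CS +
  fixes F0 :: "('a word set \<times> nat) set" and N :: nat
  assumes OmF: "\<Omega> = Omega_F A F0" and N1: "1 \<le> N" and NF: "\<forall>Bn\<in>F0. snd Bn \<le> N"
begin

abbreviation "A' \<equiv> nball_alph N A \<Omega>"

definition FF :: "('a nsym word set \<times> nat) set" where
  "FF = {Bn. is_ball A' Bn \<and> snd Bn = 1 \<and> (\<forall>\<eta>\<in>Omega_n N \<Omega>. \<forall>\<beta>\<in>\<eta>. ball_of 1 (act \<beta> \<eta>) \<noteq> fst Bn)}"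

end

locale LG = CS2 +
  fixes \<eta> :: "'a nsym word set" and Z :: "'a nsym word \<Rightarrow> 'a word set"
  assumes eta: "\<eta> \<in> CC A'"
    and Z: "\<And>\<beta>. \<beta> \<in> \<eta> \<Longrightarrow> Z \<beta> \<in> \<Omega> \<and> ball_of 1 (act \<beta> \<eta>) = ball_of 1 (phi_n N (Z \<beta>))"
begin

lemma eta_fg: "\<eta> \<subseteq> fg A'" using eta by (auto simp: CC_def convex_def)
lemma eta_allred: "allred \<eta>" using eta_fg by (auto simp: allred_def fg_def)
lemma eta_red: "\<beta> \<in> \<eta> \<Longrightarrow> reduced \<beta>" using eta_fg by (auto simp: fg_def)
lemma eta_drop: "\<beta> \<in> \<eta> \<Longrightarrow> drop k \<beta> \<in> \<eta>" using eta by (auto simp: CC_def convex_def)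
lemma eta_Nil: "[] \<in> \<eta>" using eta by (auto simp: CC_def convex_def)
lemma eta_tl: "x # \<beta> \<in> \<eta> \<Longrightarrow> \<beta> \<in> \<eta>" using eta_drop[of "x # \<beta>" 1] by simp

lemma Zin: "\<beta> \<in> \<eta> \<Longrightarrow> Z \<beta> \<in> \<Omega>" using Z by blast
lemma Zall: "\<beta> \<in> \<eta> \<Longrightarrow> allred (Z \<beta>)" using Zin Om_allred by blast

definition V :: "'a nsym word \<Rightarrow> 'a word set" where "V \<beta> = ball_of N (Z \<beta>)"

lemma L_char:
  assumes b: "\<beta> \<in> \<eta>"
  shows "fmult [x] \<beta> \<in> \<eta> \<longleftrightarrow> (\<exists>s. [s] \<in> Z \<beta> \<and> x = phi_letter N (Z \<beta>) s [])"
proof -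
  have "fmult [x] \<beta> \<in> \<eta> \<longleftrightarrow> [x] \<in> act \<beta> \<eta>" using mem_act[OF eta_allred, of "[x]" \<beta>] by simp
  also have "\<dots> \<longleftrightarrow> [x] \<in> ball_of 1 (act \<beta> \<eta>)" by (simp add: ball_of_def)
  also have "\<dots> \<longleftrightarrow> [x] \<in> ball_of 1 (phi_n N (Z \<beta>))" using Z[OF b] by simp
  also have "\<dots> \<longleftrightarrow> [x] \<in> phi_n N (Z \<beta>)" by (simp add: ball_of_def)
  also have "\<dots> \<longleftrightarrow> (\<exists>s. [s] \<in> Z \<beta> \<and> x = phi_letter N (Z \<beta>) s [])"
    by (rule phi_single_mem[OF Zall[OF b]])
  finally show ?thesis .
qed

lemma La: "\<beta> \<in> \<eta> \<Longrightarrow> fmult [x] \<beta> \<in> \<eta> \<Longrightarrow> src x = V \<beta>"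
  using L_char src_lz Zall V_def by metis

lemma Lb: "\<beta> \<in> \<eta> \<Longrightarrow> fmult [x] \<beta> \<in> \<eta> \<Longrightarrow> [mm x] \<in> Z \<beta> \<and> tgt x = ball_of N (act [mm x] (Z \<beta>))"
  using L_char tgt_lz mm_phi_letter by metis

lemma Lc: "\<beta> \<in> \<eta> \<Longrightarrow> fmult [x] \<beta> \<in> \<eta> \<Longrightarrow> fmult [y] \<beta> \<in> \<eta> \<Longrightarrow> mm x = mm y \<Longrightarrow> x = y"
  using L_char mm_phi_letter by metis

lemma Ld: "\<beta> \<in> \<eta> \<Longrightarrow> [t] \<in> Z \<beta> \<Longrightarrow> \<exists>x. fmult [x] \<beta> \<in> \<eta> \<and> mm x = t"
  using L_char mm_phi_letter by metis

lemma cons_L: "x # \<beta> \<in> \<eta> \<Longrightarrow> fmult [x] \<beta> = x # \<beta>"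
  using eta_red fmult_single_Cons by blast

lemma back_L: "x # \<beta> \<in> \<eta> \<Longrightarrow> fmult [inv_letter x] (x # \<beta>) = \<beta>"
  using eta_red[of "x # \<beta>"] by (simp add: fmult_single red_cons_def)

lemma mmred: "\<beta> \<in> \<eta> \<Longrightarrow> reduced (map mm \<beta>)"
proof (induction \<beta>)
  case (Cons x b)
  have b: "b \<in> \<eta>" using eta_tl[OF Cons.prems] .
  show ?case
  proof (cases b)
    case (Cons y b')
    have xL: "fmult [x] b \<in> \<eta>" using cons_L[OF Cons.prems] Cons.prems by simp
    have yL: "fmult [inv_letter y] b \<in> \<eta>" using back_L[of y b'] b Cons eta_tl[of y b'] by simp
    have "x \<noteq> inv_letter y" using eta_red[OF Cons.prems] Cons by (auto simp: inv_eq_iff)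
    then have "mm x \<noteq> mm (inv_letter y)" using Lc[OF b xL yL] by blast
    then show ?thesis using Cons.IH[OF b] Cons by (auto simp: inv_eq_iff)
  qed simp
qed simp

lemma Psi_eta: "\<beta> \<in> \<eta> \<Longrightarrow> Psi_n \<beta> = map mm \<beta>"
  using mmred map_mm_reduced by blast

lemma mminj: "\<beta> \<in> \<eta> \<Longrightarrow> \<beta>' \<in> \<eta> \<Longrightarrow> map mm \<beta> = map mm \<beta>' \<Longrightarrow> \<beta> = \<beta>'"
proof (induction \<beta> arbitrary: \<beta>')
  case Nil then show ?case by simp
next
  case (Cons x b)
  then obtain x' b' where b': "\<beta>' = x' # b'" by (cases \<beta>') auto
  have bb: "b \<in> \<eta>" "b' \<in> \<eta>" using Cons.prems b' eta_tl by auto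
  have "b = b'" using Cons.IH[OF bb(1) bb(2)] Cons.prems b' by simp
  moreover have "fmult [x] b \<in> \<eta>" "fmult [x'] b \<in> \<eta>"
    using cons_L Cons.prems b' \<open>b = b'\<close> by auto
  then have "x = x'" using Lc[OF bb(1)] Cons.prems b' by simp
  ultimately show ?case using b' by simp
qed

definition xi :: "'a word set" where "xi = map mm ` \<eta>"

lemma xi_fg: "xi \<subseteq> fg A"
proof
  fix w assume "w \<in> xi"
  then obtain \<beta> where b: "\<beta> \<in> \<eta>" "w = map mm \<beta>" by (auto simp: xi_def)
  have "fst x \<in> A'" if "x \<in> set \<beta>" for x using eta_fg b that by (auto simp: fg_def)
  then have "fst (mm x) \<in> A" if "x \<in> set \<beta>" for x using that unfolding nball_alph_def mm_def by fastforce
  then show "w \<in> fg A" using b mmred by (auto simp: fg_def)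
qed

lemma xi_drop: "w \<in> xi \<Longrightarrow> drop k w \<in> xi"
  by (auto simp: xi_def drop_map intro: eta_drop)

lemma xi_CC: "xi \<in> CC A"
  using xi_fg xi_drop eta_Nil by (force simp: CC_def convex_def xi_def)

lemma T:
  assumes b: "\<beta> \<in> \<eta>" and m: "fmult [t] (map mm \<beta>) \<in> xi"
  shows "\<exists>x. fmult [x] \<beta> \<in> \<eta> \<and> mm x = t"
proof (cases "\<exists>x0 b0. \<beta> = x0 # b0 \<and> mm x0 = inv_letter t")
  case True
  then obtain x0 b0 where x0: "\<beta> = x0 # b0" "mm x0 = inv_letter t" by blast
  have "fmult [inv_letter x0] \<beta> \<in> \<eta>" using back_L[of x0 b0] b x0 eta_tl by simp
  moreover have "mm (inv_letter x0) = t" using x0 by simp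
  ultimately show ?thesis by blast
next
  case False
  then have h: "map mm \<beta> = [] \<or> hd (map mm \<beta>) \<noteq> inv_letter t" by (cases \<beta>) auto
  have "reduced (t # map mm \<beta>)" using h mmred[OF b] by (simp only: reduced_Cons)
  then have "fmult [t] (map mm \<beta>) = t # map mm \<beta>" by (rule fmult_single_Cons)
  then obtain \<beta>2 where b2: "\<beta>2 \<in> \<eta>" "map mm \<beta>2 = t # map mm \<beta>" using m by (auto simp: xi_def)
  then obtain y b2' where y: "\<beta>2 = y # b2'" by (cases \<beta>2) auto
  have "b2' = \<beta>" using mminj[of b2' \<beta>] eta_tl b2 y b by simp
  then have "fmult [y] \<beta> \<in> \<eta>" using cons_L b2 y by simp
  moreover have "mm y = t" using b2 y by simp
  ultimately show ?thesis by blast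
qed


lemma xi_mem: "\<beta> \<in> \<eta> \<Longrightarrow> map mm \<beta> \<in> xi" by (simp add: xi_def)

lemma V_sub: "\<beta> \<in> \<eta> \<Longrightarrow> V \<beta> \<subseteq> {\<delta> \<in> fg A. length \<delta> \<le> N}"
  using Om_fg[OF Zin] by (auto simp: V_def ball_of_def)

lemma fmult_snoc: "reduced (\<delta>' @ [t]) \<Longrightarrow> fmult \<delta>' [t] = \<delta>' @ [t]"
  by (simp add: fmult_def freduce_id)

lemma key:
  "\<delta> \<in> fg A \<Longrightarrow> length \<delta> \<le> N \<Longrightarrow> \<beta> \<in> \<eta> \<Longrightarrow> (fmult \<delta> (map mm \<beta>) \<in> xi \<longleftrightarrow> \<delta> \<in> V \<beta>)"
proof (induction \<delta> arbitrary: \<beta> rule: rev_induct)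
  case Nil
  have "fmult [] (map mm \<beta>) = map mm \<beta>" using mmred[OF Nil(3)] by (simp add: fmult_Nil_left)
  moreover have "[] \<in> V \<beta>" using Om_Nil[OF Zin[OF Nil(3)]] by (simp add: V_def ball_of_def)
  ultimately show ?case using xi_mem[OF Nil(3)] by simp
next
  case (snoc t \<delta>')
  let ?\<delta> = "\<delta>' @ [t]"
  have rd: "reduced ?\<delta>" using snoc.prems by (simp add: fg_def)
  have d': "\<delta>' \<in> fg A" using snoc.prems(1) rd by (auto simp: fg_def reduced_append)
  have ld': "length \<delta>' \<le> N" using snoc.prems(2) by simp
  have b: "\<beta> \<in> \<eta>" by fact
  have ZO: "Z \<beta> \<in> \<Omega>" using Zin[OF b] .
  have fd: "fmult \<delta>' [t] = ?\<delta>" using rd by (rule fmult_snoc)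
  show ?case
  proof (cases "[t] \<in> Z \<beta>")
    case True
    obtain x where x: "fmult [x] \<beta> \<in> \<eta>" "mm x = t" using Ld[OF b True] by blast
    let ?\<beta>2 = "fmult [x] \<beta>"
    have tg: "tgt x = ball_of N (act [t] (Z \<beta>))" using Lb[OF b x(1)] x(2) by simp
    have "fmult [inv_letter x] [x] = []"
      using fmult_finv_left[of "[x]"] by (simp add: finv_def)
    then have "fmult [inv_letter x] ?\<beta>2 = \<beta>"
      using eta_red[OF b] by (simp add: fmult_assoc[symmetric] fmult_Nil_left)
    then have ib: "fmult [inv_letter x] ?\<beta>2 \<in> \<eta>" using b by simp
    have V2: "V ?\<beta>2 = ball_of N (act [t] (Z \<beta>))" using La[OF x(1) ib] tg by simp
    have "?\<delta> \<in> V \<beta> \<longleftrightarrow> ?\<delta> \<in> Z \<beta>" using snoc.prems(2) by (simp add: V_def ball_of_def)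
    also have "\<dots> \<longleftrightarrow> fmult \<delta>' [t] \<in> Z \<beta>" using fd by simp
    also have "\<dots> \<longleftrightarrow> \<delta>' \<in> act [t] (Z \<beta>)"
      using mem_act[OF Zall[OF b], of \<delta>' "[t]"] d' by (simp add: fg_def)
    also have "\<dots> \<longleftrightarrow> \<delta>' \<in> V ?\<beta>2" using V2 ld' by (simp add: ball_of_def)
    also have "\<dots> \<longleftrightarrow> fmult \<delta>' (map mm ?\<beta>2) \<in> xi" using snoc.IH[OF d' ld' x(1)] by simp
    also have "map mm ?\<beta>2 = fmult [t] (map mm \<beta>)"
      using Psi_eta[OF x(1)] Psi_eta[OF b] x(2) by (simp add: Psi_hom)
    also have "fmult \<delta>' (fmult [t] (map mm \<beta>)) = fmult ?\<delta> (map mm \<beta>)"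
      using fd by (simp add: fmult_assoc[symmetric])
    finally show ?thesis by simp
  next
    case False
    have "?\<delta> \<notin> V \<beta>"
    proof
      assume "?\<delta> \<in> V \<beta>"
      then have "?\<delta> \<in> Z \<beta>" by (simp add: V_def ball_of_def)
      then have "drop (length \<delta>') ?\<delta> \<in> Z \<beta>" using Om_drop[OF ZO] by blast
      then show False using False by simp
    qed
    moreover have "fmult ?\<delta> (map mm \<beta>) \<notin> xi"
    proof
      assume m: "fmult ?\<delta> (map mm \<beta>) \<in> xi"
      have "fmult [t] (map mm \<beta>) \<in> xi"
        using geod[of xi "map mm \<beta>" \<delta>' t] xi_drop xi_mem[OF b] mmred[OF b] rd m by blast
      then obtain x where "fmult [x] \<beta> \<in> \<eta>" "mm x = t" using T[OF b] by blast
      then have "[t] \<in> Z \<beta>" using Lb[OF b] by blast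
      then show False using False by simp
    qed
    ultimately show ?thesis by simp
  qed
qed

lemma ball_xi: "\<beta> \<in> \<eta> \<Longrightarrow> ball_of N (act (map mm \<beta>) xi) = V \<beta>"
proof -
  assume b: "\<beta> \<in> \<eta>"
  have mf: "map mm \<beta> \<in> fg A" using xi_fg xi_mem[OF b] by blast
  show ?thesis unfolding ball_act[OF xi_fg mf] using key[OF _ _ b] V_sub[OF b] by blast
qed

lemma phi_xi: "\<beta> \<in> \<eta> \<Longrightarrow> phi_word N xi (map mm \<beta>) = \<beta>"
proof (induction \<beta>)
  case (Cons x b)
  have b: "b \<in> \<eta>" using eta_tl[OF Cons.prems] .
  have r: "reduced (mm x # map mm b)" using mmred[OF Cons.prems] by simp
  have xL: "fmult [x] b \<in> \<eta>" using cons_L[OF Cons.prems] Cons.prems by simp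
  have ixL: "fmult [inv_letter x] (x # b) \<in> \<eta>" using back_L[OF Cons.prems] b by simp
  have s: "src x = V b" using La[OF b xL] .
  have t: "tgt x = V (x # b)" using La[OF Cons.prems ixL] by simp
  have B0: "ball_of N (act (map mm b) xi) = V b" using ball_xi[OF b] .
  have B1: "ball_of N (act (mm x # map mm b) xi) = V (x # b)" using ball_xi[OF Cons.prems] by simp
  have "phi_letter N xi (mm x) (map mm b) = x"
  proof -
    obtain p a q e where x: "x = ((p, a, q), e)" by (cases x) auto
    show ?thesis using s t B0 B1 x
      by (cases e) (simp_all add: phi_letter_def Let_def src_def tgt_def mm_def)
  qed
  then show ?case using phi_Cons[OF r, of N xi] Cons.IH[OF b] by simp
qed simp

lemma phi_n_xi: "phi_n N xi = \<eta>"
proof -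
  have "phi_n N xi = phi_word N xi ` (map mm ` \<eta>)" using xi_def phi_n_def by metis
  also have "\<dots> = (\<lambda>\<beta>. phi_word N xi (map mm \<beta>)) ` \<eta>" by (simp add: image_image)
  also have "\<dots> = \<eta>" using phi_xi by simp
  finally show ?thesis .
qed

lemma xi_Om: "xi \<in> \<Omega>"
proof -
  have "\<forall>Bn\<in>F0. avoids xi Bn"
  proof (intro ballI)
    fix Bn assume Bn: "Bn \<in> F0"
    show "avoids xi Bn" unfolding avoids_def
    proof
      fix \<alpha> assume "\<alpha> \<in> xi"
      then obtain \<beta> where b: "\<beta> \<in> \<eta>" "\<alpha> = map mm \<beta>" by (auto simp: xi_def)
      have le: "snd Bn \<le> N" using NF Bn by blast
      have "ball_of (snd Bn) (act \<alpha> xi) = ball_of (snd Bn) (ball_of N (act \<alpha> xi))"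
        by (rule ball_ball[OF le, symmetric])
      also have "\<dots> = ball_of (snd Bn) (Z \<beta>)" using ball_xi[OF b(1)] b(2) ball_ball[OF le] by (simp add: V_def)
      also have "\<dots> = ball_of (snd Bn) (act [] (Z \<beta>))" using act_Nil[OF Zall[OF b(1)]] by simp
      also have "\<dots> \<noteq> fst Bn"
        using Zin[OF b(1)] Om_Nil[OF Zin[OF b(1)]] Bn OmF by (auto simp: Omega_F_def avoids_def)
      finally show "ball_of (snd Bn) (act \<alpha> xi) \<noteq> fst Bn" .
    qed
  qed
  then show ?thesis using xi_CC OmF by (simp add: Omega_F_def)
qed

lemma eta_in: "\<eta> \<in> Omega_n N \<Omega>"
  using xi_Om phi_n_xi by (auto simp: Omega_n_def)

end

context CS begin

lemma Omn_CC: "\<eta> \<in> Omega_n n \<Omega> \<Longrightarrow> \<eta> \<in> CC (nball_alph n A \<Omega>)"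
proof -
  assume e: "\<eta> \<in> Omega_n n \<Omega>"
  then obtain \<xi> where xi: "\<xi> \<in> \<Omega>" "\<eta> = phi_n n \<xi>" using Omn_elem by blast
  have "[] \<in> \<eta>" using xi Om_Nil[OF xi(1)] by (auto simp: phi_n_def intro: image_eqI[of _ _ "[]"])
  moreover have "drop k w \<in> \<eta>" if wi: "w \<in> \<eta>" for w k
  proof -
    obtain \<alpha> where a: "\<alpha> \<in> \<xi>" "w = phi_word n \<xi> \<alpha>" using wi xi by (auto simp: phi_n_def)
    have "drop k w = phi_word n \<xi> (drop k \<alpha>)" using phi_drop Om_red[OF xi(1) a(1)] a by blast
    then show ?thesis using Om_drop[OF xi(1) a(1)] xi by (auto simp: phi_n_def)
  qed
  ultimately show ?thesis using Omn_fg[OF e] by (auto simp: CC_def convex_def)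
qed

lemma Omn_inv: "\<eta> \<in> Omega_n n \<Omega> \<Longrightarrow> \<beta> \<in> \<eta> \<Longrightarrow> act \<beta> \<eta> \<in> Omega_n n \<Omega>"
proof -
  assume e: "\<eta> \<in> Omega_n n \<Omega>" "\<beta> \<in> \<eta>"
  then obtain \<xi> where xi: "\<xi> \<in> \<Omega>" "\<eta> = phi_n n \<xi>" using Omn_elem by blast
  then obtain \<alpha> where a: "\<alpha> \<in> \<xi>" "\<beta> = phi_word n \<xi> \<alpha>" using e by (auto simp: phi_n_def)
  have "act \<beta> \<eta> = phi_n n (act \<alpha> \<xi>)" using act_phi[OF Om_allred[OF xi(1)]] xi a by simp
  then show ?thesis using Om_act[OF xi(1) a(1)] by (auto simp: Omega_n_def)
qed

end

context CS2 begin

lemma step1: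
  assumes eta: "\<eta> \<in> CC A'" and av: "\<forall>Bn\<in>FF. avoids \<eta> Bn" and b: "\<beta> \<in> \<eta>"
  shows "\<exists>\<zeta>\<in>\<Omega>. ball_of 1 (act \<beta> \<eta>) = ball_of 1 (phi_n N \<zeta>)"
proof -
  let ?B = "ball_of 1 (act \<beta> \<eta>)"
  have ef: "\<eta> \<subseteq> fg A'" using eta by (auto simp: CC_def convex_def)
  have ar: "allred \<eta>" using ef by (auto simp: allred_def fg_def)
  have bf: "\<beta> \<in> fg A'" using ef b by auto
  have sub: "act \<beta> \<eta> \<subseteq> fg A'" using act_sub_fg[OF ef bf] .
  have nil: "[] \<in> act \<beta> \<eta>" using mem_act[OF ar, of "[]" \<beta>] b bf
    by (simp add: fmult_Nil_left fg_def)
  have "?B \<in> CC A'"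
    unfolding CC_def convex_def
  proof (intro CollectI conjI ballI allI)
    show "?B \<subseteq> fg A'" using sub by (auto simp: ball_of_def)
    show "[] \<in> ?B" using nil by (simp add: ball_of_def)
    fix w k assume "w \<in> ?B"
    then show "drop k w \<in> ?B" using len1_drop[of w k] nil by (auto simp: ball_of_def)
  qed
  then have isb: "is_ball A' (?B, 1)" by (auto simp: is_ball_def ball_of_def)
  have "\<exists>\<eta>0\<in>Omega_n N \<Omega>. \<exists>\<beta>0\<in>\<eta>0. ball_of 1 (act \<beta>0 \<eta>0) = ?B"
  proof (rule ccontr)
    assume "\<not> ?thesis"
    then have "(?B, 1) \<in> FF" using isb by (auto simp: FF_def)
    then have "avoids \<eta> (?B, 1)" using av by blast
    then show False using b unfolding avoids_def by (metis fst_conv snd_conv)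
  qed
  then obtain \<eta>0 \<beta>0 where e0: "\<eta>0 \<in> Omega_n N \<Omega>" "\<beta>0 \<in> \<eta>0" "ball_of 1 (act \<beta>0 \<eta>0) = ?B" by blast
  then obtain \<zeta>0 where z0: "\<zeta>0 \<in> \<Omega>" "\<eta>0 = phi_n N \<zeta>0" using Omn_elem by blast
  then obtain \<alpha>0 where a0: "\<alpha>0 \<in> \<zeta>0" "\<beta>0 = phi_word N \<zeta>0 \<alpha>0" using e0 by (auto simp: phi_n_def)
  have "act \<beta>0 \<eta>0 = phi_n N (act \<alpha>0 \<zeta>0)" using act_phi[OF Om_allred[OF z0(1)]] z0 a0 by simp
  then show ?thesis using Om_act[OF z0(1) a0(1)] e0(3) by metis
qed

lemma L2G:
  assumes eta: "\<eta> \<in> CC A'" and av: "\<forall>Bn\<in>FF. avoids \<eta> Bn"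
  shows "\<eta> \<in> Omega_n N \<Omega>"
proof -
  obtain Z where Z: "\<forall>\<beta>\<in>\<eta>. Z \<beta> \<in> \<Omega> \<and> ball_of 1 (act \<beta> \<eta>) = ball_of 1 (phi_n N (Z \<beta>))"
    using step1[OF eta av] by metis
  interpret L: LG A \<Omega> F0 N \<eta> Z
    by unfold_locales (use eta Z in auto)
  show ?thesis by (rule L.eta_in)
qed

lemma Omn_eq: "Omega_n N \<Omega> = Omega_F A' FF"
proof
  show "Omega_n N \<Omega> \<subseteq> Omega_F A' FF"
  proof
    fix \<eta> assume e: "\<eta> \<in> Omega_n N \<Omega>"
    have "avoids \<eta> Bn" if bn: "Bn \<in> FF" for Bn
    proof -
      have "snd Bn = 1" "\<forall>\<eta>\<in>Omega_n N \<Omega>. \<forall>\<beta>\<in>\<eta>. ball_of 1 (act \<beta> \<eta>) \<noteq> fst Bn"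
        using bn by (simp_all add: FF_def)
      then show ?thesis unfolding avoids_def using e by simp
    qed
    then show "\<eta> \<in> Omega_F A' FF" using Omn_CC[OF e] by (auto simp: Omega_F_def)
  qed
next
  show "Omega_F A' FF \<subseteq> Omega_n N \<Omega>"
    using L2G by (auto simp: Omega_F_def)
qed

lemma FF_finite: "finite FF"
proof -
  have "FF \<subseteq> Pow {w \<in> fg A'. length w \<le> 1} \<times> {1}"
  proof
    fix Bn assume bn: "Bn \<in> FF"
    obtain B R where BR: "Bn = (B, R)" by (cases Bn)
    have "is_ball A' (B, R) \<and> R = 1" using bn BR unfolding FF_def by auto
    then have "is_ball A' (B, R)" "R = 1" by blast+
    then have "B \<subseteq> fg A'" "\<forall>\<alpha>\<in>B. length \<alpha> \<le> 1" "R = 1"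
      by (simp_all add: is_ball_def CC_def convex_def)
    then show "Bn \<in> Pow {w \<in> fg A'. length w \<le> 1} \<times> {1}" using BR by blast
  qed
  moreover have "finite (Pow {w \<in> fg A'. length w \<le> 1} \<times> {1::nat})"
    using gfg_len_finite[OF finite_nball] by simp
  ultimately show ?thesis by (rule finite_subset)
qed

lemma part2: "finite A' \<and> convex_subshift A' (Omega_n N \<Omega>) \<and> R_step 1 A' (Omega_n N \<Omega>) \<and>
    direct_dyn_equiv A' (Omega_n N \<Omega>) A \<Omega> psi_n Psi_n"
proof (intro conjI)
  show "finite A'" by (rule finite_nball)
  show "convex_subshift A' (Omega_n N \<Omega>)"
    unfolding convex_subshift_def
  proof (intro conjI ballI)
    show "Omega_n N \<Omega> \<subseteq> CC A'" using Omn_CC by blast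
    show "closedin cantor_top (Omega_n N \<Omega>)" unfolding Omn_eq by (rule Omega_F_closed[OF finite_nball])
    fix \<eta> \<beta> assume "\<eta> \<in> Omega_n N \<Omega>" "\<beta> \<in> \<eta>"
    then show "act \<beta> \<eta> \<in> Omega_n N \<Omega>" by (rule Omn_inv)
  qed
  show "R_step 1 A' (Omega_n N \<Omega>)"
    unfolding R_step_def
  proof (intro exI[of _ FF] conjI ballI)
    show "finite FF" by (rule FF_finite)
    show "Omega_n N \<Omega> = Omega_F A' FF" by (rule Omn_eq)
    fix Bn assume "Bn \<in> FF"
    then show "is_ball A' Bn" "snd Bn = 1" by (simp_all add: FF_def)
  qed
  show "direct_dyn_equiv A' (Omega_n N \<Omega>) A \<Omega> psi_n Psi_n" by (rule part1)
qed

end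

theorem proposition3:
  fixes A :: "'a set" and \<Omega> :: "'a word set set" and n :: nat
  assumes "finite A" and "convex_subshift A \<Omega>" and "n \<ge> 1"
  shows "direct_dyn_equiv (nball_alph n A \<Omega>) (Omega_n n \<Omega>) A \<Omega> psi_n Psi_n \<and>
         (finite_type A \<Omega> \<longrightarrow>
           (\<exists>(A' :: 'a nsym set) \<Omega>' \<phi> \<Psi>. finite A' \<and> convex_subshift A' \<Omega>' \<and>
               R_step 1 A' \<Omega>' \<and> direct_dyn_equiv A' \<Omega>' A \<Omega> \<phi> \<Psi>))"
proof -
  interpret CS A \<Omega> using assms(1,2) by unfold_locales
  have p1: "direct_dyn_equiv (nball_alph n A \<Omega>) (Omega_n n \<Omega>) A \<Omega> psi_n Psi_n"
    by (rule part1)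
  have p2: "finite_type A \<Omega> \<longrightarrow>
           (\<exists>(A' :: 'a nsym set) \<Omega>' \<phi> \<Psi>. finite A' \<and> convex_subshift A' \<Omega>' \<and>
               R_step 1 A' \<Omega>' \<and> direct_dyn_equiv A' \<Omega>' A \<Omega> \<phi> \<Psi>)"
  proof
    assume "finite_type A \<Omega>"
    then obtain F0 where F0: "finite F0" "\<Omega> = Omega_F A F0"
      by (auto simp: finite_type_def)
    define N where "N = Max (insert 1 (snd ` F0))"
    have fin: "finite (insert 1 (snd ` F0))" using F0 by simp
    have N1: "1 \<le> N" unfolding N_def using fin by (rule Max_ge) simp
    have NF: "\<forall>Bn\<in>F0. snd Bn \<le> N" unfolding N_def using fin by (auto intro: Max_ge)
    interpret CS2 A \<Omega> F0 N using F0 N1 NF by unfold_locales auto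
    show "\<exists>(A' :: 'a nsym set) \<Omega>' \<phi> \<Psi>. finite A' \<and> convex_subshift A' \<Omega>' \<and>
               R_step 1 A' \<Omega>' \<and> direct_dyn_equiv A' \<Omega>' A \<Omega> \<phi> \<Psi>"
      using part2 by blast
  qed
  show ?thesis using p1 p2 by blast
qed

end
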